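(* Let $\mathcal M\otimes\mathcal A_\varphi$ be the product of a labelled MDP $\mathcal M=(S,\mathit{Act},P,\mu)$ with labelling $L$ and a deterministic Streett automaton $\mathcal A_\varphi=(Q,2^{AP},\delta,q_0,\mathit{Acc})$, with state space $S\times Q$. Let $\pi$ be a stationary policy on the product, $\gamma\in(0,1)$, $(A,B)\in\mathit{Acc}$ (so $A,B\subseteq Q$), and $I\subseteq S\times Q$ measurable. Write $U^\otimes:=(S\times B)\cup\mathrm{Abs}_\pi\big((S\times(A\cup B))^c\big)$ (complement taken in $S\times Q$). Assume: (1) $I$ is absorbing under $\pi$ in the product and $\mu^\otimes(I)=1$; (2) $\Pr_\pi(\tau_{U^\otimes}<\infty\mid S_0=x)=1$ for all $x\in I$; (3) there is $\bar H<\infty$ with $\mathbb{E}_\pi[\tau_{U^\otimes}\mid S_0=x]\le\bar H$ for all $x\in((S\times A)\setminus(S\times B))\cap I$; (4) the reward is $r^\otimes((s,q),a,(s',q'))=\mathbf 1_{\{(s,q)\in U^\otimes\}}$. Then $W(s,q):=C-V^\pi(s,q)$ on $I$, with $C:=\frac1{1-\gamma}$, is a Streett supermartingale for $(S\times A,S\times B)$ on $\mathcal M\otimes\mathcal A_\varphi$ with supporting invariant $I$.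
   Context: An MDP $(S,\mathit{Act},P,\mu)$ has state/action spaces finite/countable or Borel subsets of Euclidean space, a stochastic kernel $P$ on $S$ given $S\times\mathit{Act}$ and initial distribution $\mu$. A labelled MDP additionally has a finite set $AP$ of atomic propositions and a labelling $L:S\to2^{AP}$. A deterministic Streett automaton is $(Q,2^{AP},\delta,q_0,\mathit{Acc})$ with finite $Q$, $\delta:Q\times2^{AP}\to Q$, $q_0\in Q$, and $\mathit{Acc}$ a finite set of pairs $(A_i,B_i)$, $A_i,B_i\subseteq Q$. The product MDP $\mathcal M\otimes\mathcal A_\varphi$ has state space $S\times Q$, actions $\mathit{Act}$, transitions from $(s,q)$ under $a$ to $(s',\delta(q,L(s)))$ with $s'\sim P(\cdot\mid s,a)$, and initial distribution $\mu^\otimes=\mu\otimes\delta_{q_0}$. A stationary policy $\pi$ is a stochastic kernel on actions given states; $\Pr_\pi(\cdot\mid S_0=x)$, $\mathbb{E}_\pi[\cdot\mid S_0=x]$ refer to the product process started at $x$. Value function: $V^\pi(x)=\mathbb{E}_\pi[\sum_{t\ge0}\gamma^t r^\otimes(S_t,A_t,S_{t+1})\mid S_0=x]$. A measurable set $X$ is absorbing if $\Pr_\pi(S_1\in X\mid S_0=x)=1$ for all $x\in X$; $\mathrm{Abs}_\pi(X):=\{x:\Pr_\pi(\forall t\ge0:S_t\in X\mid S_0=x)=1\}$; $\tau_U:=\inf\{t\ge0:S_t\in U\}$. Streett supermartingale (on a state space $\mathcal X$ with initial distribution $\nu$): for measurable $A',B',I\subseteq\mathcal X$, $W:I\to[0,\infty)$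 is a Streett supermartingale for $(A',B')$ with supporting invariant $I$ if $\nu(I)=1$, $\Pr_\pi(S_1\in I\mid S_0=x)=1$ for $x\in I$, there is $\varepsilon>0$ with $\mathbb{E}_\pi[W(S_1)\mid S_0=x]\le W(x)-\varepsilon$ for $x\in(A'\setminus B')\cap I$, and $\mathbb{E}_\pi[W(S_1)\mid S_0=x]\le W(x)$ for $x\in I\setminus(A'\cup B')$. *)

theory Defs
  imports "HOL-Probability.Probability"
begin

definition prod_space :: "'s measure \<Rightarrow> 'q set \<Rightarrow> ('s \<times> 'q) measure" where
  "prod_space Ms Q = Ms \<Otimes>\<^sub>M count_space Q"

definition prod_kernel ::
  "'s measure \<Rightarrow> 'q set \<Rightarrow> ('s \<Rightarrow> 'a \<Rightarrow> 's measure) \<Rightarrow> ('s \<Rightarrow> 'ap set)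
    \<Rightarrow> ('q \<Rightarrow> 'ap set \<Rightarrow> 'q) \<Rightarrow> ('s \<times> 'q) \<Rightarrow> 'a \<Rightarrow> ('s \<times> 'q) measure" where
  "prod_kernel Ms Q P L \<delta> x a =
     distr (P (fst x) a) (prod_space Ms Q) (\<lambda>s'. (s', \<delta> (snd x) (L (fst x))))"

definition prod_init :: "'s measure \<Rightarrow> 's measure \<Rightarrow> 'q set \<Rightarrow> 'q \<Rightarrow> ('s \<times> 'q) measure" where
  "prod_init Ms \<mu> Q q0 = distr \<mu> (prod_space Ms Q) (\<lambda>s. (s, q0))"

text \<open>Trajectories are sequences omega with omega t = (S_t, A_t).\<close>
definition step_kernel ::
  "'x measure \<Rightarrow> 'a measure \<Rightarrow> ('x \<Rightarrow> 'a \<Rightarrow> 'x measure) \<Rightarrow> ('x \<Rightarrow> 'a measure)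
    \<Rightarrow> 'x \<Rightarrow> nat \<Rightarrow> (nat \<Rightarrow> 'x \<times> 'a) \<Rightarrow> ('x \<times> 'a) measure" where
  "step_kernel Mx Ma K \<pi> x i h =
     (if i = 0 then return Mx x else K (fst (h (i - 1))) (snd (h (i - 1))))
       \<bind> (\<lambda>y. distr (\<pi> y) (Mx \<Otimes>\<^sub>M Ma) (\<lambda>a. (y, a)))"

definition path_measure ::
  "'x measure \<Rightarrow> 'a measure \<Rightarrow> ('x \<Rightarrow> 'a \<Rightarrow> 'x measure) \<Rightarrow> ('x \<Rightarrow> 'a measure)
    \<Rightarrow> 'x \<Rightarrow> (nat \<Rightarrow> 'x \<times> 'a) measure" where
  "path_measure Mx Ma K \<pi> x =
     projective_family.lim UNIV
       (Ionescu_Tulcea.CI (step_kernel Mx Ma K \<pi> x) (\<lambda>_. Mx \<Otimes>\<^sub>M Ma))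
       (\<lambda>_. Mx \<Otimes>\<^sub>M Ma)"

definition absorbing :: "('x \<Rightarrow> (nat \<Rightarrow> 'x \<times> 'a) measure) \<Rightarrow> 'x set \<Rightarrow> bool" where
  "absorbing Pr X \<longleftrightarrow>
     (\<forall>x\<in>X. measure (Pr x) {\<omega> \<in> space (Pr x). fst (\<omega> 1) \<in> X} = 1)"

definition Abs :: "'x measure \<Rightarrow> ('x \<Rightarrow> (nat \<Rightarrow> 'x \<times> 'a) measure) \<Rightarrow> 'x set \<Rightarrow> 'x set" where
  "Abs Mx Pr X =
     {x \<in> space Mx. measure (Pr x) {\<omega> \<in> space (Pr x). \<forall>t. fst (\<omega> t) \<in> X} = 1}"

definition hitting_time :: "'x set \<Rightarrow> (nat \<Rightarrow> 'x \<times> 'a) \<Rightarrow> enat" where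
  "hitting_time U \<omega> =
     (if \<exists>t. fst (\<omega> t) \<in> U then enat (LEAST t. fst (\<omega> t) \<in> U) else \<infinity>)"

definition value_fun ::
  "('x \<Rightarrow> (nat \<Rightarrow> 'x \<times> 'a) measure) \<Rightarrow> real \<Rightarrow> ('x \<Rightarrow> 'a \<Rightarrow> 'x \<Rightarrow> real) \<Rightarrow> 'x \<Rightarrow> real" where
  "value_fun Pr \<gamma> r x =
     (\<integral>\<omega>. (\<Sum>t. \<gamma> ^ t * r (fst (\<omega> t)) (snd (\<omega> t)) (fst (\<omega> (Suc t)))) \<partial>Pr x)"

text \<open>The expectation E_pi[W(S_1) | S_0 = x]
is required to exist (integrability) where it is used.\<close>
definition streett_supermartingale ::
  "'x measure \<Rightarrow> ('x \<Rightarrow> (nat \<Rightarrow> 'x \<times> 'a) measure) \<Rightarrow> 'x measure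
    \<Rightarrow> 'x set \<Rightarrow> 'x set \<Rightarrow> 'x set \<Rightarrow> ('x \<Rightarrow> real) \<Rightarrow> bool" where
  "streett_supermartingale Mx Pr \<nu> A' B' I W \<longleftrightarrow>
     A' \<in> sets Mx \<and> B' \<in> sets Mx \<and> I \<in> sets Mx \<and>
     (\<forall>x\<in>I. 0 \<le> W x) \<and>
     measure \<nu> I = 1 \<and>
     (\<forall>x\<in>I. measure (Pr x) {\<omega> \<in> space (Pr x). fst (\<omega> 1) \<in> I} = 1) \<and>
     (\<forall>x\<in>I - B'. integrable (Pr x) (\<lambda>\<omega>. W (fst (\<omega> 1)))) \<and>
     (\<exists>\<epsilon>>0. \<forall>x\<in>(A' - B') \<inter> I. (\<integral>\<omega>. W (fst (\<omega> 1)) \<partial>Pr x) \<le> W x - \<epsilon>) \<and>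
     (\<forall>x\<in>I - (A' \<union> B'). (\<integral>\<omega>. W (fst (\<omega> 1)) \<partial>Pr x) \<le> W x)"

end

theory Submission
  imports Defs
begin

lemma distr_const_prob:
  assumes "prob_space M" "c \<in> space N"
  shows "distr M N (\<lambda>_. c) = return N c"
proof (rule measure_eqI)
  fix A assume A: "A \<in> sets (distr M N (\<lambda>_. c))"
  then have A': "A \<in> sets N" by simp
  have "emeasure (distr M N (\<lambda>_. c)) A = emeasure M ((\<lambda>_. c) -` A \<inter> space M)"
    using assms A' by (intro emeasure_distr) auto
  also have "\<dots> = indicator A c"
    using prob_space.emeasure_space_1[OF assms(1)] by (auto simp: indicator_def)
  also have "\<dots> = emeasure (return N c) A"
    using A' by simp
  finally show "emeasure (distr M N (\<lambda>_. c)) A = emeasure (return N c) A" .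
qed simp

locale mc =
  fixes E :: "'e measure" and Kp :: "'e \<Rightarrow> 'e measure"
  assumes Kp[measurable]: "Kp \<in> E \<rightarrow>\<^sub>M prob_algebra E"
begin

definition ITk :: "'e measure \<Rightarrow> nat \<Rightarrow> (nat \<Rightarrow> 'e) \<Rightarrow> 'e measure" where
  "ITk \<nu> = (\<lambda>i h. if i = 0 then \<nu> else Kp (h (i - 1)))"

definition QQ :: "'e measure \<Rightarrow> (nat \<Rightarrow> 'e) measure" where
  "QQ \<nu> = projective_family.lim UNIV (Ionescu_Tulcea.CI (ITk \<nu>) (\<lambda>_. E)) (\<lambda>_. E)"

definition stepk :: "nat \<Rightarrow> (nat \<Rightarrow> 'e) \<Rightarrow> (nat \<Rightarrow> 'e) measure" where
  "stepk n \<omega> = distr (Kp (\<omega> (n - 1))) (PiM {0..<Suc n} (\<lambda>_. E)) (fun_upd \<omega> n)"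

fun FD :: "'e measure \<Rightarrow> nat \<Rightarrow> (nat \<Rightarrow> 'e) measure" where
  "FD \<nu> 0 = return (PiM {0..<0} (\<lambda>_. E)) (\<lambda>_. undefined)"
| "FD \<nu> (Suc 0) = distr \<nu> (PiM {0..<Suc 0} (\<lambda>_. E)) (\<lambda>e. (\<lambda>_. undefined)(0 := e))"
| "FD \<nu> (Suc (Suc n)) = FD \<nu> (Suc n) \<bind> stepk (Suc n)"

lemma measurable_stepk[measurable]:
  "stepk (Suc n) \<in> PiM {0..<Suc n} (\<lambda>_. E) \<rightarrow>\<^sub>M prob_algebra (PiM {0..<Suc (Suc n)} (\<lambda>_. E))"
  unfolding stepk_def[abs_def]
  apply (rule measurable_distr_prob_space2[where M=E])
   apply measurable
  apply (rule measurable_fun_upd[where J="{0..<Suc n}"])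
  apply auto
  done

lemma measurable_upd0[measurable]:
  "(\<lambda>e. (\<lambda>_. undefined)(0 := e)) \<in> E \<rightarrow>\<^sub>M PiM {0..<Suc 0} (\<lambda>_. E)"
  by (rule measurable_fun_upd[where J="{}"]) (auto simp: measurable_const)

lemma FD_meas:
  assumes \<kappa>[measurable]: "\<kappa> \<in> \<Lambda> \<rightarrow>\<^sub>M prob_algebra E"
  shows "(\<lambda>y. FD (\<kappa> y) n) \<in> \<Lambda> \<rightarrow>\<^sub>M prob_algebra (PiM {0..<n} (\<lambda>_. E))"
proof (induction n rule: induct_nat_012)
  case 0
  show ?case
    unfolding FD.simps by (rule measurable_const) (auto simp: space_prob_algebra prob_space_return)
next
  case 1
  show ?case
    unfolding FD.simps by (rule measurable_distr_prob_space2[where M=E]) (auto simp: measurable_split_conv)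
next
  case (ge2 n)
  show ?case
    using ge2(2) unfolding FD.simps by (intro measurable_bind_prob_space) auto
qed

lemma FD_prob:
  assumes "\<nu> \<in> space (prob_algebra E)"
  shows "FD \<nu> n \<in> space (prob_algebra (PiM {0..<n} (\<lambda>_. E)))"
proof -
  have "(\<lambda>_::unit. \<nu>) \<in> count_space UNIV \<rightarrow>\<^sub>M prob_algebra E"
    using assms by (rule measurable_const)
  from measurable_space[OF FD_meas[OF this], of "()"] show ?thesis by simp
qed

lemma FD_bind:
  assumes \<kappa>[measurable]: "\<kappa> \<in> \<Lambda> \<rightarrow>\<^sub>M prob_algebra E"
    and la: "la \<in> space (prob_algebra \<Lambda>)"
  shows "FD (la \<bind> \<kappa>) n = la \<bind> (\<lambda>y. FD (\<kappa> y) n)"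
proof -
  have sl[measurable_cong]: "sets la = sets \<Lambda>" and pl: "prob_space la"
    using la by (auto simp: space_prob_algebra)
  have ne: "space la \<noteq> {}" using pl prob_space.not_empty by blast
  have \<kappa>': "\<kappa> \<in> la \<rightarrow>\<^sub>M subprob_algebra E"
    using measurable_prob_algebraD[OF \<kappa>] by (simp add: measurable_cong_sets[OF sl refl])
  show ?thesis
  proof (induction n rule: induct_nat_012)
    case 0
    show ?case
      by simp (rule bind_const'[symmetric, OF pl], rule prob_space_imp_subprob_space,
               rule prob_space_return, simp)
  next
    case 1
    show ?case
      by simp (rule distr_bind[OF \<kappa>' ne], simp)
  next
    case (ge2 n)
    have m: "(\<lambda>y. FD (\<kappa> y) (Suc n)) \<in> la \<rightarrow>\<^sub>M subprob_algebra (PiM {0..<Suc n} (\<lambda>_. E))"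
      using measurable_prob_algebraD[OF FD_meas[OF \<kappa>]]
      by (simp add: measurable_cong_sets[OF sl refl])
    have "FD (la \<bind> \<kappa>) (Suc (Suc n)) = (la \<bind> (\<lambda>y. FD (\<kappa> y) (Suc n))) \<bind> stepk (Suc n)"
      using ge2(2) by simp
    also have "\<dots> = la \<bind> (\<lambda>y. FD (\<kappa> y) (Suc n) \<bind> stepk (Suc n))"
      by (rule bind_assoc[OF m measurable_prob_algebraD[OF measurable_stepk]])
    finally show ?case by simp
  qed
qed

lemma IT:
  assumes "\<nu> \<in> space (prob_algebra E)"
  shows "Ionescu_Tulcea (ITk \<nu>) (\<lambda>_. E)"
proof -
  have 1: "ITk \<nu> i \<in> PiM {0..<i} (\<lambda>_. E) \<rightarrow>\<^sub>M subprob_algebra E" for i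
  proof (cases i)
    case 0
    then show ?thesis using assms
      by (simp add: ITk_def, intro measurable_const)
         (auto simp: space_subprob_algebra space_prob_algebra prob_space_imp_subprob_space)
  next
    case (Suc j)
    then show ?thesis
      by (simp add: ITk_def, intro measurable_prob_algebraD) measurable
  qed
  have 2: "prob_space (ITk \<nu> i x)" if x: "x \<in> space (PiM {0..<i} (\<lambda>_. E))" for i x
  proof (cases i)
    case 0 then show ?thesis using assms by (simp add: ITk_def space_prob_algebra)
  next
    case (Suc j)
    with x have "x (i - 1) \<in> space E" by (auto simp: space_PiM PiE_iff)
    from measurable_space[OF Kp this] Suc show ?thesis by (simp add: ITk_def space_prob_algebra)
  qed
  show ?thesis by (rule Ionescu_Tulcea.intro[OF 1 2])
qed

lemma FD_eq_C:
  assumes \<nu>: "\<nu> \<in> space (prob_algebra E)"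
  shows "Ionescu_Tulcea.C (ITk \<nu>) (\<lambda>_. E) 0 n (\<lambda>_. undefined) = FD \<nu> n"
proof -
  interpret T: Ionescu_Tulcea "ITk \<nu>" "\<lambda>_. E" by (rule IT[OF \<nu>])
  have eP: "T.eP (Suc n) = stepk (Suc n)" for n
    by (rule ext, subst T.eP_def) (simp add: stepk_def ITk_def)
  show ?thesis
  proof (induction n rule: induct_nat_012)
    case 0 then show ?case by simp
  next
    case 1
    have "T.C 0 (Suc 0) (\<lambda>_. undefined) = return (PiM {0..<0} (\<lambda>_. E)) (\<lambda>_. undefined) \<bind> T.eP 0" by simp
    also have "\<dots> = T.eP 0 (\<lambda>_. undefined)"
      by (rule bind_return[OF T.measurable_eP]) simp
    also have "\<dots> = FD \<nu> (Suc 0)" by (subst T.eP_def) (simp add: ITk_def)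
    finally show ?case .
  next
    case (ge2 n)
    then show ?case using eP by simp
  qed
qed

lemma sets_QQ:
  assumes \<nu>: "\<nu> \<in> space (prob_algebra E)"
  shows "sets (QQ \<nu>) = sets (PiM UNIV (\<lambda>_. E))"
proof -
  interpret T: Ionescu_Tulcea "ITk \<nu>" "\<lambda>_. E" by (rule IT[OF \<nu>])
  show ?thesis unfolding QQ_def by (rule T.PF.sets_lim)
qed

lemma space_QQ:
  assumes \<nu>: "\<nu> \<in> space (prob_algebra E)"
  shows "space (QQ \<nu>) = space (PiM UNIV (\<lambda>_. E))"
proof -
  interpret T: Ionescu_Tulcea "ITk \<nu>" "\<lambda>_. E" by (rule IT[OF \<nu>])
  show ?thesis unfolding QQ_def by (rule T.PF.space_lim)
qed

lemma QQ_emb: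
  assumes \<nu>: "\<nu> \<in> space (prob_algebra E)"
    and X: "X \<in> sets (PiM {0..<n} (\<lambda>_. E))"
  shows "emeasure (QQ \<nu>) (prod_emb UNIV (\<lambda>_. E) {0..<n} X) = emeasure (FD \<nu> n) X"
proof -
  interpret T: Ionescu_Tulcea "ITk \<nu>" "\<lambda>_. E" by (rule IT[OF \<nu>])
  have "emeasure (QQ \<nu>) (prod_emb UNIV (\<lambda>_. E) {0..<n} X) = emeasure (T.CI {0..<n}) X"
    unfolding QQ_def by (rule T.lim) (use X in auto)
  also have "\<dots> = emeasure (T.C 0 n (\<lambda>_. undefined)) (prod_emb {0..<n} (\<lambda>_. E) {0..<n} X)"
    by (rule T.emeasure_CI) (use X in auto)
  also have "prod_emb {0..<n} (\<lambda>_. E) {0..<n} X = X"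
    using sets.sets_into_space[OF X] by (intro prod_emb_id) (simp add: space_PiM)
  finally show ?thesis by (simp add: FD_eq_C[OF \<nu>])
qed

lemma QQ_prob_space:
  assumes \<nu>: "\<nu> \<in> space (prob_algebra E)"
  shows "prob_space (QQ \<nu>)"
proof (rule prob_spaceI)
  have sp: "space (QQ \<nu>) = prod_emb UNIV (\<lambda>_. E) {0..<0} (space (PiM {0..<0} (\<lambda>_. E)))"
    by (auto simp: space_QQ[OF \<nu>] prod_emb_def space_PiM PiE_iff restrict_def)
  show "emeasure (QQ \<nu>) (space (QQ \<nu>)) = 1"
    unfolding sp by (subst QQ_emb[OF \<nu>]) auto
qed

lemma QQ_prob:
  assumes \<nu>: "\<nu> \<in> space (prob_algebra E)"
  shows "QQ \<nu> \<in> space (prob_algebra (PiM UNIV (\<lambda>_. E)))"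
  using QQ_prob_space[OF \<nu>] sets_QQ[OF \<nu>] by (simp add: space_prob_algebra)

lemma cyl_reduce:
  fixes J :: "nat set"
  assumes "finite J" "X \<in> sets (PiM J (\<lambda>_. E))"
  obtains n Y where "Y \<in> sets (PiM {0..<n} (\<lambda>_. E))"
    "prod_emb UNIV (\<lambda>_. E) J X = prod_emb UNIV (\<lambda>_. E) {0..<n} Y"
proof -
  define n where "n = Suc (Max (insert 0 J))"
  have J: "J \<subseteq> {0..<n}" using assms(1) by (auto simp: n_def less_Suc_eq_le)
  show ?thesis
    by (rule that[of "prod_emb {0..<n} (\<lambda>_. E) J X"]) (use J assms in auto)
qed

lemma QQ_eqI:
  assumes \<nu>: "\<nu> \<in> space (prob_algebra E)"
    and N: "sets N = sets (PiM UNIV (\<lambda>_. E))" "finite_measure N"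
    and eq: "\<And>n X. X \<in> sets (PiM {0..<n} (\<lambda>_. E)) \<Longrightarrow>
       emeasure N (prod_emb UNIV (\<lambda>_. E) {0..<n} X) = emeasure (FD \<nu> n) X"
  shows "N = QQ \<nu>"
proof (rule measure_eqI_PiM_infinite[OF N(1) sets_QQ[OF \<nu>] _ N(2)])
  fix J :: "nat set" and A assume J: "finite J" and A: "\<And>i. i \<in> J \<Longrightarrow> A i \<in> sets E"
  have "Pi\<^sub>E J A \<in> sets (PiM J (\<lambda>_. E))" using J A by (intro sets_PiM_I_finite) auto
  from cyl_reduce[OF J this] obtain n Y where Y: "Y \<in> sets (PiM {0..<n} (\<lambda>_. E))"
    and eqY: "prod_emb UNIV (\<lambda>_. E) J (Pi\<^sub>E J A) = prod_emb UNIV (\<lambda>_. E) {0..<n} Y" by blast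
  show "emeasure N (prod_emb UNIV (\<lambda>_. E) J (Pi\<^sub>E J A)) = emeasure (QQ \<nu>) (prod_emb UNIV (\<lambda>_. E) J (Pi\<^sub>E J A))"
    unfolding eqY eq[OF Y] QQ_emb[OF \<nu> Y] ..
qed

lemma QQ_meas:
  assumes \<kappa>[measurable]: "\<kappa> \<in> \<Lambda> \<rightarrow>\<^sub>M prob_algebra E"
  shows "(\<lambda>y. QQ (\<kappa> y)) \<in> \<Lambda> \<rightarrow>\<^sub>M prob_algebra (PiM UNIV (\<lambda>_. E))"
proof (rule measurable_prob_algebra_generated[where \<Omega>="space (PiM UNIV (\<lambda>_. E))" and G="prod_algebra (UNIV::nat set) (\<lambda>_. E)"])
  show "sets (PiM UNIV (\<lambda>_. E)) = sigma_sets (space (PiM UNIV (\<lambda>_. E))) (prod_algebra (UNIV::nat set) (\<lambda>_. E))"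
    by (simp add: sets_PiM space_PiM)
  show "Int_stable (prod_algebra (UNIV::nat set) (\<lambda>_. E))" by (rule Int_stable_prod_algebra)
  show "prod_algebra (UNIV::nat set) (\<lambda>_. E) \<subseteq> Pow (space (PiM UNIV (\<lambda>_. E)))"
    using prod_algebra_sets_into_space by (simp add: space_PiM)
next
  fix a assume a: "a \<in> space \<Lambda>"
  have ka: "\<kappa> a \<in> space (prob_algebra E)" using measurable_space[OF \<kappa> a] .
  show "prob_space (QQ (\<kappa> a))" by (rule QQ_prob_space[OF ka])
next
  fix a assume a: "a \<in> space \<Lambda>"
  have ka: "\<kappa> a \<in> space (prob_algebra E)" using measurable_space[OF \<kappa> a] .
  show "sets (QQ (\<kappa> a)) = sets (PiM UNIV (\<lambda>_. E))" by (rule sets_QQ[OF ka])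
next
  fix A assume "A \<in> prod_algebra (UNIV::nat set) (\<lambda>_. E)"
  then obtain J X where A: "A = prod_emb UNIV (\<lambda>_. E) J (Pi\<^sub>E J X)" and J: "finite J"
    and X: "\<And>i. i \<in> J \<Longrightarrow> X i \<in> sets E"
    by (auto elim!: prod_algebraE)
  have "Pi\<^sub>E J X \<in> sets (PiM J (\<lambda>_. E))" using J X by (intro sets_PiM_I_finite) auto
  from cyl_reduce[OF J this] obtain n Y where Y: "Y \<in> sets (PiM {0..<n} (\<lambda>_. E))"
    and eqY: "A = prod_emb UNIV (\<lambda>_. E) {0..<n} Y" unfolding A by blast
  have m: "(\<lambda>a. emeasure (FD (\<kappa> a) n) Y) \<in> borel_measurable \<Lambda>"
    using measurable_compose[OF measurable_prob_algebraD[OF FD_meas[OF \<kappa>]] measurable_emeasure_subprob_algebra[OF Y]] .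
  have "(\<lambda>a. emeasure (QQ (\<kappa> a)) A) \<in> borel_measurable \<Lambda> \<longleftrightarrow> (\<lambda>a. emeasure (FD (\<kappa> a) n) Y) \<in> borel_measurable \<Lambda>"
    by (rule measurable_cong) (simp add: eqY QQ_emb[OF measurable_space[OF \<kappa>] Y])
  with m show "(\<lambda>a. emeasure (QQ (\<kappa> a)) A) \<in> borel_measurable \<Lambda>" by simp
qed

lemma QQ_bind:
  assumes \<kappa>[measurable]: "\<kappa> \<in> \<Lambda> \<rightarrow>\<^sub>M prob_algebra E"
    and la: "la \<in> space (prob_algebra \<Lambda>)"
  shows "QQ (la \<bind> \<kappa>) = la \<bind> (\<lambda>y. QQ (\<kappa> y))"
proof -
  have lk: "la \<bind> \<kappa> \<in> space (prob_algebra E)"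
    using sets_bind'[OF la \<kappa>] prob_space_bind'[OF la \<kappa>] by (simp add: space_prob_algebra)
  have sl: "sets la = sets \<Lambda>" and pl: "prob_space la" using la by (auto simp: space_prob_algebra)
  have spl: "space la = space \<Lambda>" using sets_eq_imp_space_eq[OF sl] .
  have Qm: "(\<lambda>y. QQ (\<kappa> y)) \<in> \<Lambda> \<rightarrow>\<^sub>M prob_algebra (PiM UNIV (\<lambda>_. E))" by (rule QQ_meas[OF \<kappa>])
  show ?thesis
  proof (rule QQ_eqI[OF lk, symmetric])
    show "sets (la \<bind> (\<lambda>y. QQ (\<kappa> y))) = sets (PiM UNIV (\<lambda>_. E))" by (rule sets_bind'[OF la Qm])
    show "finite_measure (la \<bind> (\<lambda>y. QQ (\<kappa> y)))"
      using prob_space_bind'[OF la Qm] by (simp add: prob_space_def)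
  next
    fix n :: nat and X assume X: "X \<in> sets (PiM {0..<n} (\<lambda>_. E))"
    have "emeasure (la \<bind> (\<lambda>y. QQ (\<kappa> y))) (prod_emb UNIV (\<lambda>_. E) {0..<n} X)
        = (\<integral>\<^sup>+y. emeasure (QQ (\<kappa> y)) (prod_emb UNIV (\<lambda>_. E) {0..<n} X) \<partial>la)"
      by (rule emeasure_bind_prob_algebra[OF la Qm]) (use X in auto)
    also have "\<dots> = (\<integral>\<^sup>+y. emeasure (FD (\<kappa> y) n) X \<partial>la)"
      by (rule nn_integral_cong) (simp add: spl QQ_emb[OF measurable_space[OF \<kappa>] X])
    also have "\<dots> = emeasure (la \<bind> (\<lambda>y. FD (\<kappa> y) n)) X"
      by (rule emeasure_bind_prob_algebra[OF la FD_meas[OF \<kappa>] X, symmetric])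
    also have "\<dots> = emeasure (FD (la \<bind> \<kappa>) n) X" by (simp add: FD_bind[OF \<kappa> la])
    finally show "emeasure (la \<bind> (\<lambda>y. QQ (\<kappa> y))) (prod_emb UNIV (\<lambda>_. E) {0..<n} X) = emeasure (FD (la \<bind> \<kappa>) n) X" .
  qed
qed

end


context mc
begin

definition dropn :: "nat \<Rightarrow> (nat \<Rightarrow> 'e) \<Rightarrow> (nat \<Rightarrow> 'e)" where
  "dropn n \<omega> = restrict (\<lambda>i. \<omega> (Suc i)) {0..<n}"

lemma measurable_dropn[measurable]:
  "dropn n \<in> PiM {0..<Suc n} (\<lambda>_. E) \<rightarrow>\<^sub>M PiM {0..<n} (\<lambda>_. E)"
  unfolding dropn_def[abs_def] by (rule measurable_restrict) auto

definition sh :: "(nat \<Rightarrow> 'e) \<Rightarrow> (nat \<Rightarrow> 'e)" where "sh \<omega> = (\<lambda>t. \<omega> (Suc t))"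

lemma measurable_sh[measurable]: "sh \<in> PiM UNIV (\<lambda>_. E) \<rightarrow>\<^sub>M PiM UNIV (\<lambda>_. E)"
proof -
  have "(\<lambda>x. \<lambda>i\<in>UNIV. x (Suc i)) \<in> PiM UNIV (\<lambda>_. E) \<rightarrow>\<^sub>M PiM UNIV (\<lambda>_. E)"
    by (rule measurable_restrict) auto
  then show ?thesis by (simp add: sh_def[abs_def] restrict_def)
qed

lemma FD_drop:
  assumes \<nu>: "\<nu> \<in> space (prob_algebra E)"
  shows "distr (FD \<nu> (Suc n)) (PiM {0..<n} (\<lambda>_. E)) (dropn n) = FD (\<nu> \<bind> Kp) n"
proof -
  have sn[measurable_cong]: "sets \<nu> = sets E" and pn: "prob_space \<nu>" using \<nu> by (auto simp: space_prob_algebra)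
  have nne: "space \<nu> \<noteq> {}" using pn prob_space.not_empty by blast
  have spn: "space \<nu> = space E" using sets_eq_imp_space_eq[OF sn] .
  have Fp: "prob_space (FD \<nu> m)" and Fs: "sets (FD \<nu> m) = sets (PiM {0..<m} (\<lambda>_. E))" for m
    using FD_prob[OF \<nu>, of m] by (auto simp: space_prob_algebra)
  have Fne: "space (FD \<nu> m) \<noteq> {}" for m using Fp[of m] prob_space.not_empty by blast
  have Fsp: "space (FD \<nu> m) = space (PiM {0..<m} (\<lambda>_. E))" for m using sets_eq_imp_space_eq[OF Fs] .
  have Kps: "sets (Kp e) = sets E" if "e \<in> space E" for e
    using measurable_space[OF Kp that] by (simp add: space_prob_algebra)
  show ?thesis
  proof (induction n rule: induct_nat_012)
    case 0
    have "dropn 0 = (\<lambda>_ _. undefined)" by (auto simp: dropn_def fun_eq_iff)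
    have "distr (FD \<nu> (Suc 0)) (PiM {0..<0} (\<lambda>_. E)) (dropn 0) = return (PiM {0..<0} (\<lambda>_. E)) (\<lambda>_. undefined)"
      unfolding \<open>dropn 0 = _\<close> by (rule distr_const_prob[OF Fp]) simp
    then show ?case by simp
  next
    case 1
    define g :: "'e \<Rightarrow> nat \<Rightarrow> 'e" where "g = (\<lambda>e. (\<lambda>_. undefined)(0 := e))"
    have gm[measurable]: "g \<in> E \<rightarrow>\<^sub>M PiM {0..<Suc 0} (\<lambda>_. E)" unfolding g_def by (rule measurable_upd0)
    have um: "fun_upd (g e) (Suc 0) \<in> E \<rightarrow>\<^sub>M PiM {0..<Suc (Suc 0)} (\<lambda>_. E)" if "e \<in> space E" for e
      by (rule measurable_fun_upd[where J="{0..<Suc 0}"]) (use that gm in \<open>auto intro!: measurable_const measurable_space\<close>)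
    have "FD \<nu> (Suc (Suc 0)) = distr \<nu> (PiM {0..<Suc 0} (\<lambda>_. E)) g \<bind> stepk (Suc 0)"
      by (simp add: g_def)
    also have "\<dots> = \<nu> \<bind> (\<lambda>e. stepk (Suc 0) (g e))"
      by (rule bind_distr[OF _ measurable_prob_algebraD[OF measurable_stepk] nne])
         (subst measurable_cong_sets[OF sn refl], rule gm)
    finally have eq1: "FD \<nu> (Suc (Suc 0)) = \<nu> \<bind> (\<lambda>e. stepk (Suc 0) (g e))" .
    have m1: "(\<lambda>e. stepk (Suc 0) (g e)) \<in> \<nu> \<rightarrow>\<^sub>M subprob_algebra (PiM {0..<Suc (Suc 0)} (\<lambda>_. E))"
      by (subst measurable_cong_sets[OF sn refl], rule measurable_compose[OF gm measurable_prob_algebraD[OF measurable_stepk]])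
    have Kp': "Kp \<in> \<nu> \<rightarrow>\<^sub>M subprob_algebra E"
      by (subst measurable_cong_sets[OF sn refl], rule measurable_prob_algebraD[OF Kp])
    have "distr (FD \<nu> (Suc (Suc 0))) (PiM {0..<Suc 0} (\<lambda>_. E)) (dropn (Suc 0))
        = \<nu> \<bind> (\<lambda>e. distr (stepk (Suc 0) (g e)) (PiM {0..<Suc 0} (\<lambda>_. E)) (dropn (Suc 0)))"
      unfolding eq1 by (rule distr_bind[OF m1 nne measurable_dropn])
    also have "\<dots> = \<nu> \<bind> (\<lambda>e. distr (Kp e) (PiM {0..<Suc 0} (\<lambda>_. E)) g)"
    proof (rule bind_cong)
      fix e assume e: "e \<in> space \<nu>"
      then have e': "e \<in> space E" by (simp add: spn)
      have st: "stepk (Suc 0) (g e) = distr (Kp e) (PiM {0..<Suc (Suc 0)} (\<lambda>_. E)) (fun_upd (g e) (Suc 0))"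
        by (simp add: stepk_def g_def)
      have "distr (stepk (Suc 0) (g e)) (PiM {0..<Suc 0} (\<lambda>_. E)) (dropn (Suc 0))
          = distr (Kp e) (PiM {0..<Suc 0} (\<lambda>_. E)) (dropn (Suc 0) \<circ> fun_upd (g e) (Suc 0))"
        unfolding st
        by (rule distr_distr[OF measurable_dropn]) (subst measurable_cong_sets[OF Kps[OF e'] refl], rule um[OF e'])
      also have "dropn (Suc 0) \<circ> fun_upd (g e) (Suc 0) = g"
        by (auto simp: fun_eq_iff dropn_def g_def)
      finally show "distr (stepk (Suc 0) (g e)) (PiM {0..<Suc 0} (\<lambda>_. E)) (dropn (Suc 0)) =
          distr (Kp e) (PiM {0..<Suc 0} (\<lambda>_. E)) g" .
    qed simp
    also have "\<dots> = distr (\<nu> \<bind> Kp) (PiM {0..<Suc 0} (\<lambda>_. E)) g"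
      by (rule distr_bind[symmetric, OF Kp' nne gm])
    also have "\<dots> = FD (\<nu> \<bind> Kp) (Suc 0)" by (simp add: g_def)
    finally show ?case .
  next
    case (ge2 n)
    define m where "m = Suc n"
    have IH: "distr (FD \<nu> (Suc m)) (PiM {0..<m} (\<lambda>_. E)) (dropn m) = FD (\<nu> \<bind> Kp) m"
      using ge2(2) by (simp add: m_def)
    have sm[measurable]: "stepk m \<in> PiM {0..<m} (\<lambda>_. E) \<rightarrow>\<^sub>M prob_algebra (PiM {0..<Suc m} (\<lambda>_. E))"
      unfolding m_def by (rule measurable_stepk)
    have sm2[measurable]: "stepk (Suc m) \<in> PiM {0..<Suc m} (\<lambda>_. E) \<rightarrow>\<^sub>M prob_algebra (PiM {0..<Suc (Suc m)} (\<lambda>_. E))"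
      by (rule measurable_stepk)
    have "distr (FD \<nu> (Suc (Suc m))) (PiM {0..<Suc m} (\<lambda>_. E)) (dropn (Suc m))
        = distr (FD \<nu> (Suc m) \<bind> stepk (Suc m)) (PiM {0..<Suc m} (\<lambda>_. E)) (dropn (Suc m))"
      by (simp add: m_def)
    also have "\<dots> = FD \<nu> (Suc m) \<bind> (\<lambda>\<omega>. distr (stepk (Suc m) \<omega>) (PiM {0..<Suc m} (\<lambda>_. E)) (dropn (Suc m)))"
      by (rule distr_bind[OF _ Fne measurable_dropn])
         (subst measurable_cong_sets[OF Fs refl], rule measurable_prob_algebraD[OF sm2])
    also have "\<dots> = FD \<nu> (Suc m) \<bind> (\<lambda>\<omega>. stepk m (dropn m \<omega>))"
    proof (rule bind_cong)
      fix \<omega> assume "\<omega> \<in> space (FD \<nu> (Suc m))"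
      then have w: "\<omega> \<in> space (PiM {0..<Suc m} (\<lambda>_. E))" by (simp add: Fsp)
      then have wm: "\<omega> m \<in> space E" by (auto simp: space_PiM PiE_iff)
      have um: "fun_upd \<omega> (Suc m) \<in> E \<rightarrow>\<^sub>M PiM {0..<Suc (Suc m)} (\<lambda>_. E)"
        by (rule measurable_fun_upd[where J="{0..<Suc m}"]) (use w in \<open>auto intro!: measurable_const\<close>)
      have "distr (stepk (Suc m) \<omega>) (PiM {0..<Suc m} (\<lambda>_. E)) (dropn (Suc m))
          = distr (Kp (\<omega> m)) (PiM {0..<Suc m} (\<lambda>_. E)) (dropn (Suc m) \<circ> fun_upd \<omega> (Suc m))"
        unfolding stepk_def
        by (simp only: diff_Suc_1, rule distr_distr[OF measurable_dropn]) (subst measurable_cong_sets[OF Kps[OF wm] refl], rule um)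
      also have "\<dots> = stepk m (dropn m \<omega>)"
        unfolding stepk_def
        by (rule arg_cong2[where f="\<lambda>a b. distr a _ b"]) (auto simp: m_def dropn_def fun_eq_iff)
      finally show "distr (stepk (Suc m) \<omega>) (PiM {0..<Suc m} (\<lambda>_. E)) (dropn (Suc m)) = stepk m (dropn m \<omega>)" .
    qed simp
    also have "\<dots> = distr (FD \<nu> (Suc m)) (PiM {0..<m} (\<lambda>_. E)) (dropn m) \<bind> stepk m"
      by (rule bind_distr[symmetric, OF _ measurable_prob_algebraD[OF sm] Fne])
         (subst measurable_cong_sets[OF Fs refl], rule measurable_dropn)
    also have "\<dots> = FD (\<nu> \<bind> Kp) m \<bind> stepk m" by (simp add: IH)
    also have "\<dots> = FD (\<nu> \<bind> Kp) (Suc m)" by (simp add: m_def)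
    finally show ?case by (simp add: m_def)
  qed
qed

lemma bindK_prob:
  assumes \<nu>: "\<nu> \<in> space (prob_algebra E)"
  shows "\<nu> \<bind> Kp \<in> space (prob_algebra E)"
  using sets_bind'[OF \<nu> Kp] prob_space_bind'[OF \<nu> Kp] by (simp add: space_prob_algebra)

lemma QQ_shift:
  assumes \<nu>: "\<nu> \<in> space (prob_algebra E)"
  shows "distr (QQ \<nu>) (PiM UNIV (\<lambda>_. E)) sh = QQ (\<nu> \<bind> Kp)"
proof (rule QQ_eqI[OF bindK_prob[OF \<nu>]])
  have shm: "sh \<in> QQ \<nu> \<rightarrow>\<^sub>M PiM UNIV (\<lambda>_. E)"
    using measurable_sh by (simp add: measurable_cong_sets[OF sets_QQ[OF \<nu>] refl])
  show "sets (distr (QQ \<nu>) (PiM UNIV (\<lambda>_. E)) sh) = sets (PiM UNIV (\<lambda>_. E))" by simp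
  show "finite_measure (distr (QQ \<nu>) (PiM UNIV (\<lambda>_. E)) sh)"
    using prob_space.prob_space_distr[OF QQ_prob_space[OF \<nu>] shm] by (simp add: prob_space_def)
  fix n :: nat and X assume X: "X \<in> sets (PiM {0..<n} (\<lambda>_. E))"
  have key: "dropn n (restrict \<omega> {0..<Suc n}) = restrict (sh \<omega>) {0..<n}" for \<omega>
    by (auto simp: dropn_def sh_def fun_eq_iff)
  have pre: "sh -` prod_emb UNIV (\<lambda>_. E) {0..<n} X \<inter> space (QQ \<nu>)
      = prod_emb UNIV (\<lambda>_. E) {0..<Suc n} (dropn n -` X \<inter> space (PiM {0..<Suc n} (\<lambda>_. E)))"
    by (auto simp: space_QQ[OF \<nu>] prod_emb_def key) (auto simp: space_PiM PiE_iff sh_def)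
  have Xs: "dropn n -` X \<inter> space (PiM {0..<Suc n} (\<lambda>_. E)) \<in> sets (PiM {0..<Suc n} (\<lambda>_. E))"
    using measurable_sets[OF measurable_dropn X] .
  have Fsp: "space (FD \<nu> (Suc n)) = space (PiM {0..<Suc n} (\<lambda>_. E))"
    using FD_prob[OF \<nu>, of "Suc n"] by (auto simp: space_prob_algebra intro!: sets_eq_imp_space_eq)
  have Fs: "sets (FD \<nu> (Suc n)) = sets (PiM {0..<Suc n} (\<lambda>_. E))"
    using FD_prob[OF \<nu>, of "Suc n"] by (auto simp: space_prob_algebra)
  have Fm: "dropn n \<in> FD \<nu> (Suc n) \<rightarrow>\<^sub>M PiM {0..<n} (\<lambda>_. E)"
    using measurable_dropn by (simp add: measurable_cong_sets[OF Fs refl])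
  have "emeasure (distr (QQ \<nu>) (PiM UNIV (\<lambda>_. E)) sh) (prod_emb UNIV (\<lambda>_. E) {0..<n} X)
      = emeasure (QQ \<nu>) (sh -` prod_emb UNIV (\<lambda>_. E) {0..<n} X \<inter> space (QQ \<nu>))"
    by (rule emeasure_distr[OF shm]) (use X in auto)
  also have "\<dots> = emeasure (FD \<nu> (Suc n)) (dropn n -` X \<inter> space (PiM {0..<Suc n} (\<lambda>_. E)))"
    unfolding pre by (rule QQ_emb[OF \<nu> Xs])
  also have "\<dots> = emeasure (distr (FD \<nu> (Suc n)) (PiM {0..<n} (\<lambda>_. E)) (dropn n)) X"
    by (subst emeasure_distr[OF Fm X]) (simp add: Fsp)
  also have "\<dots> = emeasure (FD (\<nu> \<bind> Kp) n) X" by (simp add: FD_drop[OF \<nu>])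
  finally show "emeasure (distr (QQ \<nu>) (PiM UNIV (\<lambda>_. E)) sh) (prod_emb UNIV (\<lambda>_. E) {0..<n} X) =
      emeasure (FD (\<nu> \<bind> Kp) n) X" .
qed

lemma QQ_coord0:
  assumes \<nu>: "\<nu> \<in> space (prob_algebra E)"
  shows "distr (QQ \<nu>) E (\<lambda>\<omega>. \<omega> 0) = \<nu>"
proof (rule measure_eqI)
  have sn: "sets \<nu> = sets E" using \<nu> by (auto simp: space_prob_algebra)
  have spn: "space \<nu> = space E" using sets_eq_imp_space_eq[OF sn] .
  show "sets (distr (QQ \<nu>) E (\<lambda>\<omega>. \<omega> 0)) = sets \<nu>" by (simp add: sn)
  fix A assume "A \<in> sets (distr (QQ \<nu>) E (\<lambda>\<omega>. \<omega> 0))"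
  then have A: "A \<in> sets E" by simp
  have m0: "(\<lambda>\<omega>. \<omega> 0) \<in> QQ \<nu> \<rightarrow>\<^sub>M E"
    by (simp add: measurable_cong_sets[OF sets_QQ[OF \<nu>] refl])
  have S: "(\<lambda>h. h 0) -` A \<inter> space (PiM {0..<Suc 0} (\<lambda>_. E)) \<in> sets (PiM {0..<Suc 0} (\<lambda>_. E))"
    by (rule measurable_sets[OF _ A]) simp
  have pre: "(\<lambda>\<omega>. \<omega> 0) -` A \<inter> space (QQ \<nu>) = prod_emb UNIV (\<lambda>_. E) {0..<Suc 0} ((\<lambda>h. h 0) -` A \<inter> space (PiM {0..<Suc 0} (\<lambda>_. E)))"
    by (auto simp: space_QQ[OF \<nu>] prod_emb_def space_PiM PiE_iff)
  have gm: "(\<lambda>e. (\<lambda>_. undefined)(0 := e)) \<in> \<nu> \<rightarrow>\<^sub>M PiM {0..<Suc 0} (\<lambda>_. E)"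
    by (simp add: measurable_cong_sets[OF sn refl])
  have "emeasure (distr (QQ \<nu>) E (\<lambda>\<omega>. \<omega> 0)) A = emeasure (QQ \<nu>) ((\<lambda>\<omega>. \<omega> 0) -` A \<inter> space (QQ \<nu>))"
    by (rule emeasure_distr[OF m0 A])
  also have "\<dots> = emeasure (FD \<nu> (Suc 0)) ((\<lambda>h. h 0) -` A \<inter> space (PiM {0..<Suc 0} (\<lambda>_. E)))"
    unfolding pre by (rule QQ_emb[OF \<nu> S])
  also have "\<dots> = emeasure \<nu> ((\<lambda>e. (\<lambda>_. undefined)(0 := e)) -` ((\<lambda>h. h 0) -` A \<inter> space (PiM {0..<Suc 0} (\<lambda>_. E))) \<inter> space \<nu>)"
    by (simp only: FD.simps, rule emeasure_distr[OF gm S])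
  also have "(\<lambda>e. (\<lambda>_. undefined)(0 := e)) -` ((\<lambda>h. h 0) -` A \<inter> space (PiM {0..<Suc 0} (\<lambda>_. E))) \<inter> space \<nu> = A"
    using sets.sets_into_space[OF A] by (auto simp: spn space_PiM PiE_iff)
  finally show "emeasure (distr (QQ \<nu>) E (\<lambda>\<omega>. \<omega> 0)) A = emeasure \<nu> A" .
qed

end


locale pmdp =
  fixes Ms :: "'s measure" and Ma :: "'a measure"
    and P :: "'s \<Rightarrow> 'a \<Rightarrow> 's measure"
    and AP :: "'ap set" and L :: "'s \<Rightarrow> 'ap set"
    and Q :: "'q set" and \<delta> :: "'q \<Rightarrow> 'ap set \<Rightarrow> 'q"
    and \<pi> :: "'s \<times> 'q \<Rightarrow> 'a measure"
  assumes P_kernel: "(\<lambda>(s, a). P s a) \<in> Ms \<Otimes>\<^sub>M Ma \<rightarrow>\<^sub>M prob_algebra Ms"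
    and AP: "finite AP"
    and L: "L \<in> Ms \<rightarrow>\<^sub>M count_space UNIV" "\<And>s. s \<in> space Ms \<Longrightarrow> L s \<subseteq> AP"
    and delta: "\<And>q \<sigma>. q \<in> Q \<Longrightarrow> \<sigma> \<subseteq> AP \<Longrightarrow> \<delta> q \<sigma> \<in> Q"
    and pol: "\<pi> \<in> prod_space Ms Q \<rightarrow>\<^sub>M prob_algebra Ma"
begin

abbreviation "Mx \<equiv> prod_space Ms Q"
abbreviation "EE \<equiv> Mx \<Otimes>\<^sub>M Ma"
definition "\<nu>\<pi> y = distr (\<pi> y) EE (\<lambda>a. (y, a))"
definition "K' e = prod_kernel Ms Q P L \<delta> (fst e) (snd e)"
definition "Kp e = K' e \<bind> \<nu>\<pi>"
definition "\<kappa> x = return Mx x \<bind> \<nu>\<pi>"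
definition "Pr = path_measure Mx Ma (prod_kernel Ms Q P L \<delta>) \<pi>"

lemma L_meas: "L \<in> Ms \<rightarrow>\<^sub>M count_space (Pow AP)"
proof (subst measurable_count_space_eq2)
  show "finite (Pow AP)" using AP by simp
  show "L \<in> space Ms \<rightarrow> Pow AP \<and> (\<forall>a\<in>Pow AP. L -` {a} \<inter> space Ms \<in> sets Ms)"
    using L(2) measurable_sets[OF L(1)] by auto
qed

lemma dq_meas: "(\<lambda>x. \<delta> (snd x) (L (fst x))) \<in> Mx \<rightarrow>\<^sub>M count_space Q"
proof (rule measurable_compose_countable'[where I="Pow AP" and g="\<lambda>x. L (fst x)"])
  fix i assume i: "i \<in> Pow AP"
  have "(\<lambda>q. \<delta> q i) \<in> count_space Q \<rightarrow>\<^sub>M count_space Q"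
    using delta i by auto
  then show "(\<lambda>x. \<delta> (snd x) i) \<in> Mx \<rightarrow>\<^sub>M count_space Q"
    unfolding prod_space_def by (rule measurable_compose[OF measurable_snd])
next
  show "(\<lambda>x. L (fst x)) \<in> Mx \<rightarrow>\<^sub>M count_space (Pow AP)"
    unfolding prod_space_def by (rule measurable_compose[OF measurable_fst L_meas])
  show "countable (Pow AP)" using AP by (simp add: countable_finite)
qed

lemma K'_meas: "K' \<in> EE \<rightarrow>\<^sub>M prob_algebra Mx"
proof -
  have "K' = (\<lambda>e. distr (P (fst (fst e)) (snd e)) Mx (\<lambda>s'. (s', \<delta> (snd (fst e)) (L (fst (fst e))))))"
    by (auto simp: fun_eq_iff K'_def prod_kernel_def)
  also have "\<dots> \<in> EE \<rightarrow>\<^sub>M prob_algebra Mx"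
  proof (rule measurable_distr_prob_space2[where M=Ms])
    have "(\<lambda>e. (fst (fst e), snd e)) \<in> EE \<rightarrow>\<^sub>M Ms \<Otimes>\<^sub>M Ma"
      unfolding prod_space_def by measurable
    from measurable_compose[OF this P_kernel]
    show "(\<lambda>e. P (fst (fst e)) (snd e)) \<in> EE \<rightarrow>\<^sub>M prob_algebra Ms" by simp
    have d: "(\<lambda>x. \<delta> (snd (fst (fst x))) (L (fst (fst (fst x))))) \<in> EE \<Otimes>\<^sub>M Ms \<rightarrow>\<^sub>M count_space Q"
      by (rule measurable_compose[OF _ dq_meas]) measurable
    show "(\<lambda>(e, s'). (s', \<delta> (snd (fst e)) (L (fst (fst e))))) \<in> EE \<Otimes>\<^sub>M Ms \<rightarrow>\<^sub>M Mx"
      unfolding prod_space_def split_beta'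
      by (rule measurable_Pair[OF measurable_snd d[unfolded prod_space_def]])
  qed
  finally show ?thesis .
qed

lemma \<nu>\<pi>_meas: "\<nu>\<pi> \<in> Mx \<rightarrow>\<^sub>M prob_algebra EE"
  unfolding \<nu>\<pi>_def[abs_def]
  by (rule measurable_distr_prob_space2[where M=Ma, OF pol]) (simp add: split_beta')

lemma Kp_meas: "Kp \<in> EE \<rightarrow>\<^sub>M prob_algebra EE"
  unfolding Kp_def[abs_def] by (rule measurable_bind_prob_space[OF K'_meas \<nu>\<pi>_meas])

sublocale M: mc EE Kp
  by unfold_locales (rule Kp_meas)

lemma \<kappa>_eq: "x \<in> space Mx \<Longrightarrow> \<kappa> x = \<nu>\<pi> x"
  unfolding \<kappa>_def by (rule bind_return[OF measurable_prob_algebraD[OF \<nu>\<pi>_meas]])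

lemma \<kappa>_meas: "\<kappa> \<in> Mx \<rightarrow>\<^sub>M prob_algebra EE"
  using \<nu>\<pi>_meas by (subst measurable_cong[OF \<kappa>_eq]) auto

lemma \<kappa>_prob: "x \<in> space Mx \<Longrightarrow> \<kappa> x \<in> space (prob_algebra EE)"
  using measurable_space[OF \<kappa>_meas] .

lemma Pr_eq: "Pr x = M.QQ (\<kappa> x)"
proof -
  have "step_kernel Mx Ma (prod_kernel Ms Q P L \<delta>) \<pi> x = M.ITk (\<kappa> x)"
    by (auto simp: fun_eq_iff step_kernel_def M.ITk_def \<kappa>_def Kp_def K'_def \<nu>\<pi>_def[abs_def])
  then show ?thesis by (simp add: Pr_def path_measure_def M.QQ_def)
qed

lemma Pr_meas: "Pr \<in> Mx \<rightarrow>\<^sub>M prob_algebra (PiM UNIV (\<lambda>_. EE))"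
  unfolding Pr_eq[abs_def] by (rule M.QQ_meas[OF \<kappa>_meas])

lemma Pr_prob: "x \<in> space Mx \<Longrightarrow> prob_space (Pr x)"
  unfolding Pr_eq by (rule M.QQ_prob_space[OF \<kappa>_prob])

lemma sets_Pr: "x \<in> space Mx \<Longrightarrow> sets (Pr x) = sets (PiM UNIV (\<lambda>_. EE))"
  unfolding Pr_eq by (rule M.sets_QQ[OF \<kappa>_prob])

lemma space_Pr: "x \<in> space Mx \<Longrightarrow> space (Pr x) = space (PiM UNIV (\<lambda>_. EE))"
  unfolding Pr_eq by (rule M.space_QQ[OF \<kappa>_prob])

lemma Pr_coord0: "x \<in> space Mx \<Longrightarrow> distr (Pr x) EE (\<lambda>\<omega>. \<omega> 0) = \<nu>\<pi> x"
  unfolding Pr_eq by (subst M.QQ_coord0[OF \<kappa>_prob]) (simp_all add: \<kappa>_eq)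

lemma abs_integral_bound:
  fixes f :: "_ \<Rightarrow> real"
  assumes "prob_space M" "f \<in> borel_measurable M" "\<And>x. x \<in> space M \<Longrightarrow> \<bar>f x\<bar> \<le> B"
  shows "\<bar>integral\<^sup>L M f\<bar> \<le> B"
proof -
  interpret prob_space M by fact
  have int: "integrable M f"
    by (rule integrable_const_bound[where B=B]) (use assms in auto)
  have "\<bar>integral\<^sup>L M f\<bar> \<le> (\<integral>x. \<bar>f x\<bar> \<partial>M)"
    by (rule integral_abs_bound)
  also have "\<dots> \<le> (\<integral>x. B \<partial>M)"
    by (rule integral_mono) (use assms int in auto)
  also have "\<dots> = B" by (simp add: prob_space)
  finally show ?thesis .
qed

lemma nu_integral:
  fixes g :: "_ \<Rightarrow> real"
  assumes y: "y \<in> space Mx" and g: "g \<in> borel_measurable Mx"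
  shows "(\<integral>e. g (fst e) \<partial>\<nu>\<pi> y) = g y"
proof -
  have sx: "sets (\<pi> y) = sets Ma" and px: "prob_space (\<pi> y)"
    using measurable_space[OF pol y] by (auto simp: space_prob_algebra)
  have pm: "(\<lambda>a. (y, a)) \<in> \<pi> y \<rightarrow>\<^sub>M EE"
    using y by (simp add: measurable_cong_sets[OF sx refl])
  have "(\<integral>e. g (fst e) \<partial>\<nu>\<pi> y) = (\<integral>a. g (fst (y, a)) \<partial>\<pi> y)"
    unfolding \<nu>\<pi>_def by (rule integral_distr[OF pm measurable_compose[OF measurable_fst g]])
  also have "\<dots> = g y" using prob_space.prob_space[OF px] by simp
  finally show ?thesis .
qed

lemma Markov_real:
  fixes f :: "_ \<Rightarrow> real"
  assumes x: "x \<in> space Mx" and f[measurable]: "f \<in> borel_measurable (PiM UNIV (\<lambda>_. EE))"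
    and fb: "\<And>\<omega>. \<omega> \<in> space (PiM UNIV (\<lambda>_. EE)) \<Longrightarrow> \<bar>f \<omega>\<bar> \<le> B"
  shows "(\<integral>\<omega>. f (M.sh \<omega>) \<partial>Pr x) = (\<integral>\<omega>. (\<integral>\<omega>'. f \<omega>' \<partial>Pr (fst (\<omega> (Suc 0)))) \<partial>Pr x)"
proof -
  define \<nu> where "\<nu> = \<kappa> x"
  have \<nu>: "\<nu> \<in> space (prob_algebra EE)" unfolding \<nu>_def by (rule \<kappa>_prob[OF x])
  have sn: "sets \<nu> = sets EE" using \<nu> by (simp add: space_prob_algebra)
  define la where "la = \<nu> \<bind> K'"
  have la: "la \<in> space (prob_algebra Mx)"
    unfolding la_def using sets_bind'[OF \<nu> K'_meas] prob_space_bind'[OF \<nu> K'_meas] by (simp add: space_prob_algebra)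
  have sla: "sets la = sets Mx" and pla: "prob_space la" using la by (auto simp: space_prob_algebra)
  have spla: "space la = space Mx" using sets_eq_imp_space_eq[OF sla] .
  have eq1: "\<nu> \<bind> Kp = la \<bind> \<kappa>"
  proof -
    have K'n: "K' \<in> \<nu> \<rightarrow>\<^sub>M subprob_algebra Mx"
      by (subst measurable_cong_sets[OF sn refl]) (rule measurable_prob_algebraD[OF K'_meas])
    have "\<nu> \<bind> Kp = la \<bind> \<nu>\<pi>"
      unfolding la_def Kp_def[abs_def]
      by (rule bind_assoc[symmetric, OF K'n measurable_prob_algebraD[OF \<nu>\<pi>_meas]])
    also have "\<dots> = la \<bind> \<kappa>"
      by (rule bind_cong) (simp_all add: spla \<kappa>_eq)
    finally show ?thesis .
  qed
  have Prm: "Pr \<in> la \<rightarrow>\<^sub>M subprob_algebra (PiM UNIV (\<lambda>_. EE))"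
    by (subst measurable_cong_sets[OF sla refl]) (rule measurable_prob_algebraD[OF Pr_meas])
  have \<kappa>m: "\<kappa> \<in> la \<rightarrow>\<^sub>M subprob_algebra EE"
    by (subst measurable_cong_sets[OF sla refl]) (rule measurable_prob_algebraD[OF \<kappa>_meas])
  have QQb: "M.QQ (\<nu> \<bind> Kp) = la \<bind> Pr"
    unfolding eq1 by (subst M.QQ_bind[OF \<kappa>_meas la]) (simp add: Pr_eq[abs_def])
  have shd: "distr (Pr x) (PiM UNIV (\<lambda>_. EE)) M.sh = la \<bind> Pr"
    unfolding Pr_eq \<nu>_def[symmetric] M.QQ_shift[OF \<nu>] QQb ..
  have shm: "M.sh \<in> Pr x \<rightarrow>\<^sub>M PiM UNIV (\<lambda>_. EE)"
    by (subst measurable_cong_sets[OF sets_Pr[OF x] refl]) (rule M.measurable_sh)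
  define g where "g y = (\<integral>\<omega>'. f \<omega>' \<partial>Pr y)" for y
  have gm[measurable]: "g \<in> borel_measurable Mx"
    unfolding g_def[abs_def]
    by (rule measurable_compose[OF measurable_prob_algebraD[OF Pr_meas] integral_measurable_subprob_algebra[OF f]])
  have gb: "\<bar>g y\<bar> \<le> B" if "y \<in> space Mx" for y
    unfolding g_def
    by (rule abs_integral_bound[OF Pr_prob[OF that]]) (simp_all add: measurable_cong_sets[OF sets_Pr[OF that] refl] space_Pr[OF that] fb)
  have AEb: "AE y in la. emeasure (Pr y) (space (Pr y)) \<le> ennreal 1"
    by (rule AE_I2) (simp add: spla prob_space.emeasure_space_1[OF Pr_prob])
  have AEb2: "AE y in la. emeasure (\<kappa> y) (space (\<kappa> y)) \<le> ennreal 1"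
  proof (rule AE_I2)
    fix y assume "y \<in> space la"
    then have "prob_space (\<kappa> y)" using \<kappa>_prob[of y] by (simp add: spla space_prob_algebra)
    then show "emeasure (\<kappa> y) (space (\<kappa> y)) \<le> ennreal 1" by (simp add: prob_space.emeasure_space_1)
  qed
  have fml: "finite_measure la" using pla by (simp add: prob_space_def)
  have LHS: "(\<integral>\<omega>. f (M.sh \<omega>) \<partial>Pr x) = (\<integral>y. g y \<partial>la)"
  proof -
    have "(\<integral>\<omega>. f (M.sh \<omega>) \<partial>Pr x) = (\<integral>\<omega>. f \<omega> \<partial>distr (Pr x) (PiM UNIV (\<lambda>_. EE)) M.sh)"
      by (rule integral_distr[symmetric, OF shm f])
    also have "\<dots> = (\<integral>\<omega>. f \<omega> \<partial>(la \<bind> Pr))" by (simp add: shd)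
    also have "\<dots> = (\<integral>y. g y \<partial>la)"
      unfolding g_def by (rule integral_bind[OF f fb Prm fml AEb])
    finally show ?thesis .
  qed
  have RHS: "(\<integral>\<omega>. g (fst (\<omega> (Suc 0))) \<partial>Pr x) = (\<integral>y. g y \<partial>la)"
  proof -
    have gfm: "(\<lambda>\<omega>. g (fst (\<omega> 0))) \<in> borel_measurable (PiM UNIV (\<lambda>_. EE))" by measurable
    have gfe: "(\<lambda>e. g (fst e)) \<in> borel_measurable EE" by measurable
    have m0: "(\<lambda>\<omega>. \<omega> 0) \<in> M.QQ (\<nu> \<bind> Kp) \<rightarrow>\<^sub>M EE"
      by (subst measurable_cong_sets[OF M.sets_QQ[OF M.bindK_prob[OF \<nu>]] refl]) simp
    have "(\<integral>\<omega>. g (fst (\<omega> (Suc 0))) \<partial>Pr x) = (\<integral>\<omega>. g (fst (M.sh \<omega> 0)) \<partial>Pr x)" by (simp add: M.sh_def)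
    also have "\<dots> = (\<integral>\<omega>. g (fst (\<omega> 0)) \<partial>distr (Pr x) (PiM UNIV (\<lambda>_. EE)) M.sh)"
      by (rule integral_distr[symmetric, OF shm gfm])
    also have "\<dots> = (\<integral>\<omega>. g (fst (\<omega> 0)) \<partial>M.QQ (\<nu> \<bind> Kp))" by (simp add: shd QQb)
    also have "\<dots> = (\<integral>e. g (fst e) \<partial>distr (M.QQ (\<nu> \<bind> Kp)) EE (\<lambda>\<omega>. \<omega> 0))"
      by (rule integral_distr[symmetric, OF m0 gfe])
    also have "\<dots> = (\<integral>e. g (fst e) \<partial>(la \<bind> \<kappa>))" by (subst M.QQ_coord0[OF M.bindK_prob[OF \<nu>]]) (simp add: eq1)
    also have "\<dots> = (\<integral>y. (\<integral>e. g (fst e) \<partial>\<kappa> y) \<partial>la)"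
      by (rule integral_bind[where B=B, OF gfe _ \<kappa>m fml AEb2]) (auto simp: space_pair_measure intro!: gb)
    also have "\<dots> = (\<integral>y. g y \<partial>la)"
      by (rule Bochner_Integration.integral_cong[OF refl]) (simp add: spla \<kappa>_eq nu_integral[OF _ gm])
    finally show ?thesis .
  qed
  show ?thesis using LHS RHS by (simp add: g_def)
qed

lemma start_real:
  fixes g :: "_ \<Rightarrow> real"
  assumes x: "x \<in> space Mx" and g: "g \<in> borel_measurable Mx"
  shows "(\<integral>\<omega>. g (fst (\<omega> 0)) \<partial>Pr x) = g x"
proof -
  have m0: "(\<lambda>\<omega>. \<omega> 0) \<in> Pr x \<rightarrow>\<^sub>M EE"
    by (subst measurable_cong_sets[OF sets_Pr[OF x] refl]) simp
  have "(\<integral>\<omega>. g (fst (\<omega> 0)) \<partial>Pr x) = (\<integral>e. g (fst e) \<partial>distr (Pr x) EE (\<lambda>\<omega>. \<omega> 0))"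
    by (rule integral_distr[symmetric, OF m0 measurable_compose[OF measurable_fst g]])
  also have "\<dots> = g x" by (simp add: Pr_coord0[OF x] nu_integral[OF x g])
  finally show ?thesis .
qed

end


locale vmdp = pmdp +
  fixes \<gamma> :: real and U
  assumes gamma: "0 < \<gamma>" "\<gamma> < 1" and U[measurable]: "U \<in> sets (prod_space Ms Q)"
begin

definition "Rf \<omega> = (\<Sum>t. \<gamma> ^ t * indicator U (fst (\<omega> t)) :: real)"
definition "V x = (\<integral>\<omega>. Rf \<omega> \<partial>Pr x)"
definition "CC = 1 / (1 - \<gamma>)"

lemma R_summable: "summable (\<lambda>t. \<gamma> ^ t * indicator U (fst (\<omega> t)) :: real)"
proof (rule summable_comparison_test[OF _ summable_geometric[of \<gamma>]])
  show "\<exists>N. \<forall>n\<ge>N. norm (\<gamma> ^ n * indicator U (fst (\<omega> n))) \<le> \<gamma> ^ n"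
    using gamma by (auto simp: indicator_def)
  show "norm \<gamma> < 1" using gamma by simp
qed

lemma R_nonneg: "0 \<le> Rf \<omega>"
  unfolding Rf_def by (rule suminf_nonneg[OF R_summable]) (use gamma in simp)

lemma R_le: "Rf \<omega> \<le> CC"
proof -
  have "Rf \<omega> \<le> (\<Sum>t. \<gamma> ^ t)"
    unfolding Rf_def
    by (rule suminf_le[OF _ R_summable summable_geometric]) (use gamma in \<open>auto simp: indicator_def\<close>)
  also have "\<dots> = CC" using gamma by (simp add: suminf_geometric CC_def)
  finally show ?thesis .
qed

lemma R_abs: "\<bar>Rf \<omega>\<bar> \<le> CC"
  using R_nonneg[of \<omega>] R_le[of \<omega>] by (simp add: abs_of_nonneg)

lemma R_meas[measurable]: "Rf \<in> borel_measurable (PiM (UNIV::nat set) (\<lambda>_. EE))"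
  unfolding Rf_def[abs_def] by measurable

lemma R_split: "Rf \<omega> = indicator U (fst (\<omega> 0)) + \<gamma> * Rf (M.sh \<omega>)"
proof -
  have "(\<Sum>t. \<gamma> ^ Suc t * indicator U (fst (\<omega> (Suc t))) :: real) = Rf \<omega> - indicator U (fst (\<omega> 0))"
    unfolding Rf_def by (subst suminf_split_head[OF R_summable]) simp
  moreover have "(\<Sum>t. \<gamma> ^ Suc t * indicator U (fst (\<omega> (Suc t))) :: real) = \<gamma> * Rf (M.sh \<omega>)"
    unfolding Rf_def M.sh_def
    by (subst suminf_mult[OF R_summable, symmetric]) (simp add: mult.assoc)
  ultimately show ?thesis by simp
qed

lemma V_meas[measurable]: "V \<in> borel_measurable Mx"
  unfolding V_def[abs_def]
  by (rule measurable_compose[OF measurable_prob_algebraD[OF Pr_meas] integral_measurable_subprob_algebra[OF R_meas]])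

lemma V_bounds:
  assumes x: "x \<in> space Mx"
  shows "0 \<le> V x" "V x \<le> CC"
proof -
  show "0 \<le> V x" unfolding V_def by (rule Bochner_Integration.integral_nonneg) (simp add: R_nonneg)
  have "\<bar>V x\<bar> \<le> CC" unfolding V_def
    by (rule abs_integral_bound[OF Pr_prob[OF x]]) (simp_all add: measurable_cong_sets[OF sets_Pr[OF x] refl] R_abs)
  then show "V x \<le> CC" by simp
qed

lemma integrable_bounded_Pr:
  fixes f :: "_ \<Rightarrow> real"
  assumes x: "x \<in> space Mx" and f: "f \<in> borel_measurable (PiM (UNIV::nat set) (\<lambda>_. EE))"
    and b: "\<And>\<omega>. \<omega> \<in> space (PiM (UNIV::nat set) (\<lambda>_. EE)) \<Longrightarrow> \<bar>f \<omega>\<bar> \<le> B"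
  shows "integrable (Pr x) f"
proof -
  interpret prob_space "Pr x" by (rule Pr_prob[OF x])
  show ?thesis
    by (rule integrable_const_bound[where B=B]) (use b f in \<open>auto simp: space_Pr[OF x] measurable_cong_sets[OF sets_Pr[OF x] refl]\<close>)
qed

lemma S1_meas: "x \<in> space Mx \<Longrightarrow> (\<lambda>\<omega>. fst (\<omega> (Suc 0))) \<in> Pr x \<rightarrow>\<^sub>M Mx"
  by (subst measurable_cong_sets[OF sets_Pr refl]) simp_all

lemma abs_V: "y \<in> space Mx \<Longrightarrow> \<bar>V y\<bar> \<le> CC"
  using V_bounds[of y] by (simp add: abs_of_nonneg)

lemma S1_space: "\<omega> \<in> space (PiM (UNIV::nat set) (\<lambda>_. EE)) \<Longrightarrow> fst (\<omega> i) \<in> space Mx"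
  by (simp add: space_PiM PiE_iff space_pair_measure mem_Times_iff)

lemma V1_integrable: "x \<in> space Mx \<Longrightarrow> integrable (Pr x) (\<lambda>\<omega>. V (fst (\<omega> (Suc 0))))"
  by (rule integrable_bounded_Pr[where B=CC]) (simp_all, metis abs_V S1_space)

lemma Bellman:
  assumes x: "x \<in> space Mx"
  shows "V x = indicator U x + \<gamma> * (\<integral>\<omega>. V (fst (\<omega> (Suc 0))) \<partial>Pr x)"
proof -
  have i1: "integrable (Pr x) (\<lambda>\<omega>. indicator U (fst (\<omega> 0)) :: real)"
    by (rule integrable_bounded_Pr[OF x, where B=1]) (auto simp: indicator_def)
  have i2: "integrable (Pr x) (\<lambda>\<omega>. \<gamma> * Rf (M.sh \<omega>))"
    by (rule integrable_bounded_Pr[OF x, where B="\<gamma> * CC"]) (use gamma R_abs in \<open>auto simp: abs_mult\<close>)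
  have "V x = (\<integral>\<omega>. indicator U (fst (\<omega> 0)) + \<gamma> * Rf (M.sh \<omega>) \<partial>Pr x)"
    unfolding V_def by (rule Bochner_Integration.integral_cong[OF refl], rule R_split)
  also have "\<dots> = (\<integral>\<omega>. indicator U (fst (\<omega> 0)) \<partial>Pr x) + \<gamma> * (\<integral>\<omega>. Rf (M.sh \<omega>) \<partial>Pr x)"
    using i1 i2 by simp
  also have "(\<integral>\<omega>. indicator U (fst (\<omega> 0)) \<partial>Pr x) = (indicator U x :: real)"
    by (rule start_real[OF x]) simp
  also have "(\<integral>\<omega>. Rf (M.sh \<omega>) \<partial>Pr x) = (\<integral>\<omega>. V (fst (\<omega> (Suc 0))) \<partial>Pr x)"
    unfolding V_def by (rule Markov_real[OF x R_meas R_abs])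
  finally show ?thesis .
qed

definition "Yset X = {\<omega> \<in> space (PiM (UNIV::nat set) (\<lambda>_. EE)). \<forall>t. fst (\<omega> t) \<in> X}"

lemma Yset_sets: "X \<in> sets Mx \<Longrightarrow> Yset X \<in> sets (PiM (UNIV::nat set) (\<lambda>_. EE))"
proof -
  assume X[measurable]: "X \<in> sets Mx"
  have "Measurable.pred (PiM (UNIV::nat set) (\<lambda>_. EE)) (\<lambda>\<omega>. \<forall>t. fst (\<omega> t) \<in> X)"
  proof (intro pred_intros_countable)
    fix t :: nat
    show "Measurable.pred (PiM (UNIV::nat set) (\<lambda>_. EE)) (\<lambda>\<omega>. fst (\<omega> t) \<in> X)" by measurable
  qed
  then show ?thesis unfolding Yset_def by (rule predE)
qed

lemma Abs_eq: "Abs Mx Pr X = {y \<in> space Mx. measure (Pr y) (Yset X) = 1}"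
  unfolding Abs_def Yset_def by (auto simp: space_Pr)

lemma Abs_sets:
  assumes X: "X \<in> sets Mx"
  shows "Abs Mx Pr X \<in> sets Mx"
proof -
  have hm: "(\<lambda>y. measure (Pr y) (Yset X)) \<in> borel_measurable Mx"
    by (rule measurable_compose[OF Pr_meas measurable_measure_prob_algebra[OF Yset_sets[OF X]]])
  have "Abs Mx Pr X = (\<lambda>y. measure (Pr y) (Yset X)) -` {1} \<inter> space Mx"
    by (auto simp: Abs_eq)
  also have "\<dots> \<in> sets Mx" by (rule measurable_sets[OF hm]) simp
  finally show ?thesis .
qed

lemma start_measure:
  assumes y: "y \<in> space Mx" and X[measurable]: "X \<in> sets Mx"
  shows "measure (Pr y) {\<omega> \<in> space (PiM (UNIV::nat set) (\<lambda>_. EE)). fst (\<omega> 0) \<in> X} = indicator X y"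
proof -
  let ?S = "{\<omega> \<in> space (PiM (UNIV::nat set) (\<lambda>_. EE)). fst (\<omega> 0) \<in> X}"
  have "measure (Pr y) ?S = (\<integral>\<omega>. indicator ?S \<omega> \<partial>Pr y)"
    by (simp add: space_Pr[OF y] Int_absorb2)
  also have "\<dots> = (\<integral>\<omega>. indicator X (fst (\<omega> 0)) \<partial>Pr y)"
    by (rule Bochner_Integration.integral_cong[OF refl]) (auto simp: space_Pr[OF y] indicator_def)
  also have "\<dots> = indicator X y"
    by (rule start_real[OF y]) simp
  finally show ?thesis .
qed

lemma Abs_in:
  assumes X: "X \<in> sets Mx" and y: "y \<in> Abs Mx Pr X"
  shows "y \<in> X"
proof -
  have ys: "y \<in> space Mx" and h: "measure (Pr y) (Yset X) = 1" using y by (auto simp: Abs_eq)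
  interpret prob_space "Pr y" by (rule Pr_prob[OF ys])
  have Ss: "{\<omega> \<in> space (PiM (UNIV::nat set) (\<lambda>_. EE)). fst (\<omega> 0) \<in> X} \<in> sets (Pr y)"
    using X by (simp add: sets_Pr[OF ys])
  have "measure (Pr y) (Yset X) \<le> measure (Pr y) {\<omega> \<in> space (PiM (UNIV::nat set) (\<lambda>_. EE)). fst (\<omega> 0) \<in> X}"
    by (rule finite_measure_mono[OF _ Ss]) (auto simp: Yset_def)
  then have "1 \<le> (indicator X y :: real)" using h start_measure[OF ys X] by simp
  then show ?thesis by (cases "y \<in> X") auto
qed

lemma Abs_stay:
  assumes X: "X \<in> sets Mx" and y: "y \<in> Abs Mx Pr X"
  shows "AE \<omega> in Pr y. fst (\<omega> (Suc 0)) \<in> Abs Mx Pr X"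
proof -
  have ys: "y \<in> space Mx" and hy: "measure (Pr y) (Yset X) = 1" using y by (auto simp: Abs_eq)
  interpret P: prob_space "Pr y" by (rule Pr_prob[OF ys])
  define f :: "(nat \<Rightarrow> _) \<Rightarrow> real" where "f = indicator (Yset X)"
  have fm[measurable]: "f \<in> borel_measurable (PiM (UNIV::nat set) (\<lambda>_. EE))"
    unfolding f_def by (rule borel_measurable_indicator[OF Yset_sets[OF X]])
  have fb: "\<bar>f \<omega>\<bar> \<le> 1" for \<omega> by (simp add: f_def indicator_def)
  have hz: "(\<integral>\<omega>. f \<omega> \<partial>Pr z) = measure (Pr z) (Yset X)" if "z \<in> space Mx" for z
    unfolding f_def using Yset_sets[OF X] by (simp add: space_Pr[OF that] Int_absorb2 Yset_def)
  have hle: "measure (Pr z) (Yset X) \<le> 1" if "z \<in> space Mx" for z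
    using prob_space.prob_le_1[OF Pr_prob[OF that]] .
  have i1: "integrable (Pr y) f" by (rule integrable_bounded_Pr[OF ys fm]) (rule fb)
  have i2: "integrable (Pr y) (\<lambda>\<omega>. f (M.sh \<omega>))" 
    by (rule integrable_bounded_Pr[OF ys, where B=1]) (simp_all add: fb)
  have i3: "integrable (Pr y) (\<lambda>\<omega>. measure (Pr (fst (\<omega> (Suc 0)))) (Yset X))"
  proof (rule integrable_bounded_Pr[OF ys, where B=1])
    show "(\<lambda>\<omega>. measure (Pr (fst (\<omega> (Suc 0)))) (Yset X)) \<in> borel_measurable (PiM (UNIV::nat set) (\<lambda>_. EE))"
      using measurable_compose[OF Pr_meas measurable_measure_prob_algebra[OF Yset_sets[OF X]]] by measurable
    fix \<omega> assume "\<omega> \<in> space (PiM (UNIV::nat set) (\<lambda>_. EE))"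
    then have "fst (\<omega> (Suc 0)) \<in> space Mx" by (rule S1_space)
    then show "\<bar>measure (Pr (fst (\<omega> (Suc 0)))) (Yset X)\<bar> \<le> 1" using hle by simp
  qed
  have "1 = (\<integral>\<omega>. f \<omega> \<partial>Pr y)" using hz[OF ys] hy by simp
  also have "\<dots> \<le> (\<integral>\<omega>. f (M.sh \<omega>) \<partial>Pr y)"
  proof (rule integral_mono[OF i1 i2])
    fix \<omega> assume "\<omega> \<in> space (Pr y)"
    then have "\<omega> \<in> space (PiM (UNIV::nat set) (\<lambda>_. EE))" by (simp add: space_Pr[OF ys])
    then show "f \<omega> \<le> f (M.sh \<omega>)"
      by (auto simp: f_def indicator_def Yset_def M.sh_def space_PiM PiE_iff)
  qed
  also have "\<dots> = (\<integral>\<omega>. (\<integral>\<omega>'. f \<omega>' \<partial>Pr (fst (\<omega> (Suc 0)))) \<partial>Pr y)"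
    by (rule Markov_real[OF ys fm fb])
  also have "\<dots> = (\<integral>\<omega>. measure (Pr (fst (\<omega> (Suc 0)))) (Yset X) \<partial>Pr y)"
    by (rule Bochner_Integration.integral_cong[OF refl]) (simp add: hz S1_space space_Pr[OF ys])
  finally have ge: "1 \<le> (\<integral>\<omega>. measure (Pr (fst (\<omega> (Suc 0)))) (Yset X) \<partial>Pr y)" .
  let ?q = "\<lambda>\<omega>. 1 - measure (Pr (fst (\<omega> (Suc 0)))) (Yset X)"
  have iq: "integrable (Pr y) ?q" using i3 by simp
  have AEq: "AE \<omega> in Pr y. 0 \<le> ?q \<omega>"
    by (rule AE_I2) (simp add: space_Pr[OF ys] hle S1_space)
  have "(\<integral>\<omega>. ?q \<omega> \<partial>Pr y) = 1 - (\<integral>\<omega>. measure (Pr (fst (\<omega> (Suc 0)))) (Yset X) \<partial>Pr y)"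
    using i3 by (simp add: P.prob_space)
  also have "\<dots> \<le> 0" using ge by simp
  finally have "(\<integral>\<omega>. ?q \<omega> \<partial>Pr y) = 0"
    using Bochner_Integration.integral_nonneg_AE[OF AEq] by linarith
  then have "AE \<omega> in Pr y. ?q \<omega> = 0" using integral_nonneg_eq_0_iff_AE[OF iq AEq] by simp
  then show ?thesis
    using AE_space
  proof eventually_elim
    case (elim \<omega>)
    then have "fst (\<omega> (Suc 0)) \<in> space Mx" by (simp add: space_Pr[OF ys] S1_space)
    with elim show ?case by (simp add: Abs_eq)
  qed
qed

lemma Abs_V:
  assumes X: "X \<in> sets Mx" and sub: "Abs Mx Pr X \<subseteq> U" and x: "x \<in> Abs Mx Pr X"
  shows "CC \<le> (\<integral>\<omega>. V (fst (\<omega> (Suc 0))) \<partial>Pr x)"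
proof -
  define S where "S = Abs Mx Pr X"
  have Ssp: "S \<subseteq> space Mx" by (auto simp: S_def Abs_def)
  define m where "m = Inf (V ` S)"
  have bdd: "bdd_below (V ` S)" using V_bounds Ssp by (auto intro!: bdd_belowI[where m=0])
  have ne: "S \<noteq> {}" using x by (auto simp: S_def)
  have key: "m \<le> (\<integral>\<omega>. V (fst (\<omega> (Suc 0))) \<partial>Pr y)" if y: "y \<in> S" for y
  proof -
    have ys: "y \<in> space Mx" using y Ssp by auto
    interpret P: prob_space "Pr y" by (rule Pr_prob[OF ys])
    show ?thesis
    proof (rule P.integral_ge_const[OF V1_integrable[OF ys]])
      show "AE \<omega> in Pr y. m \<le> V (fst (\<omega> (Suc 0)))"
        using Abs_stay[OF X y[unfolded S_def]]
        by eventually_elim (auto simp: m_def S_def intro!: cInf_lower bdd[unfolded S_def])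
    qed
  qed
  have "1 + \<gamma> * m \<le> m"
    unfolding m_def
  proof (rule cInf_greatest)
    show "V ` S \<noteq> {}" using ne by simp
    fix v assume "v \<in> V ` S"
    then obtain y where y: "y \<in> S" and v: "v = V y" by auto
    have ys: "y \<in> space Mx" using y Ssp by auto
    have yU: "y \<in> U" using y sub by (auto simp: S_def)
    have "V y = 1 + \<gamma> * (\<integral>\<omega>. V (fst (\<omega> (Suc 0))) \<partial>Pr y)"
      using Bellman[OF ys] yU by simp
    moreover have "\<gamma> * m \<le> \<gamma> * (\<integral>\<omega>. V (fst (\<omega> (Suc 0))) \<partial>Pr y)"
      using key[OF y] gamma by (simp add: m_def)
    ultimately show "1 + \<gamma> * Inf (V ` S) \<le> v" using v by (simp add: m_def)
  qed
  then have "CC \<le> m" using gamma by (simp add: CC_def field_simps)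
  also have "m \<le> (\<integral>\<omega>. V (fst (\<omega> (Suc 0))) \<partial>Pr x)" using key x by (simp add: S_def)
  finally show ?thesis .
qed

lemma V_lower:
  assumes x: "x \<in> space Mx"
    and H: "(\<integral>\<^sup>+\<omega>. ennreal_of_enat (hitting_time U \<omega>) \<partial>Pr x) \<le> ennreal H" and H1: "1 \<le> H"
  shows "\<gamma> ^ nat \<lceil>2 * H\<rceil> / 2 \<le> V x"
proof -
  define N where "N = nat \<lceil>2 * H\<rceil>"
  interpret P: prob_space "Pr x" by (rule Pr_prob[OF x])
  define D where "D = {\<omega> \<in> space (PiM (UNIV::nat set) (\<lambda>_. EE)). \<forall>t. t \<le> N \<longrightarrow> fst (\<omega> t) \<notin> U}"
  have Ds: "D \<in> sets (PiM (UNIV::nat set) (\<lambda>_. EE))"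
  proof -
    have "Measurable.pred (PiM (UNIV::nat set) (\<lambda>_. EE)) (\<lambda>\<omega>. \<forall>t. t \<le> N \<longrightarrow> fst (\<omega> t) \<notin> U)"
    proof (intro pred_intros_countable)
      fix t :: nat
      show "Measurable.pred (PiM (UNIV::nat set) (\<lambda>_. EE)) (\<lambda>\<omega>. t \<le> N \<longrightarrow> fst (\<omega> t) \<notin> U)" by measurable
    qed
    then show ?thesis unfolding D_def by (rule predE)
  qed
  have DsP: "D \<in> sets (Pr x)" using Ds by (simp add: sets_Pr[OF x])
  have hit: "of_nat (Suc N) * indicator D \<omega> \<le> ennreal_of_enat (hitting_time U \<omega>)" for \<omega>
  proof (cases "\<omega> \<in> D")
    case True
    show ?thesis
    proof (cases "\<exists>t. fst (\<omega> t) \<in> U")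
      case ex: True
      have "fst (\<omega> (LEAST t. fst (\<omega> t) \<in> U)) \<in> U" by (rule LeastI_ex[OF ex])
      then have "\<not> (LEAST t. fst (\<omega> t) \<in> U) \<le> N" using True by (auto simp: D_def)
      then have "Suc N \<le> (LEAST t. fst (\<omega> t) \<in> U)" by simp
      then have "(of_nat (Suc N) :: ennreal) \<le> of_nat (LEAST t. fst (\<omega> t) \<in> U)" by (rule of_nat_mono)
      with ex True show ?thesis by (simp add: hitting_time_def)
    next
      case False
      then show ?thesis by (simp add: hitting_time_def)
    qed
  qed simp
  have "of_nat (Suc N) * emeasure (Pr x) D = (\<integral>\<^sup>+\<omega>. of_nat (Suc N) * indicator D \<omega> \<partial>Pr x)"
    by (rule nn_integral_cmult_indicator[OF DsP, symmetric])
  also have "\<dots> \<le> (\<integral>\<^sup>+\<omega>. ennreal_of_enat (hitting_time U \<omega>) \<partial>Pr x)"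
    by (rule nn_integral_mono) (rule hit)
  also have "\<dots> \<le> ennreal H" by (rule H)
  finally have "ennreal (real (Suc N) * measure (Pr x) D) \<le> ennreal H"
    by (simp add: P.emeasure_eq_measure ennreal_of_nat_eq_real_of_nat ennreal_mult)
  then have mD: "real (Suc N) * measure (Pr x) D \<le> H" using H1 by simp
  have NH: "2 * H \<le> real N" unfolding N_def by (rule real_nat_ceiling_ge)
  have mD0: "0 \<le> measure (Pr x) D" by simp
  have "2 * H * measure (Pr x) D \<le> real (Suc N) * measure (Pr x) D"
    using NH mD0 by (intro mult_right_mono) auto
  with mD have "2 * H * measure (Pr x) D \<le> H" by linarith
  then have "H * (2 * measure (Pr x) D) \<le> H * 1" by (simp add: algebra_simps)
  then have "2 * measure (Pr x) D \<le> 1" using H1 by (subst (asm) mult_le_cancel_left) auto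
  then have half: "measure (Pr x) D \<le> 1 / 2" by simp
  have g0: "0 \<le> \<gamma>" "\<gamma> \<le> 1" using gamma by auto
  have low: "\<gamma> ^ N * (1 - indicator D \<omega>) \<le> Rf \<omega>" if \<omega>: "\<omega> \<in> space (PiM (UNIV::nat set) (\<lambda>_. EE))" for \<omega>
  proof (cases "\<omega> \<in> D")
    case True then show ?thesis using R_nonneg[of \<omega>] by simp
  next
    case False
    with \<omega> obtain t where t: "t \<le> N" "fst (\<omega> t) \<in> U" by (auto simp: D_def)
    have "\<gamma> ^ N \<le> \<gamma> ^ t" by (rule power_decreasing[OF t(1) g0])
    also have "\<gamma> ^ t = sum (\<lambda>t. \<gamma> ^ t * indicator U (fst (\<omega> t))) {t}" using t by simp
    also have "\<dots> \<le> Rf \<omega>" unfolding Rf_def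
      by (rule sum_le_suminf[OF R_summable]) (use g0 in auto)
    finally show ?thesis using False by simp
  qed
  have i1: "integrable (Pr x) (\<lambda>\<omega>. \<gamma> ^ N * (1 - indicator D \<omega>))"
  proof (rule integrable_bounded_Pr[OF x, where B=1])
    show "(\<lambda>\<omega>. \<gamma> ^ N * (1 - indicator D \<omega>)) \<in> borel_measurable (PiM (UNIV::nat set) (\<lambda>_. EE))"
      by (intro borel_measurable_times borel_measurable_const borel_measurable_diff borel_measurable_indicator Ds)
    fix \<omega>
    have "\<gamma> ^ N \<le> 1" using g0 by (rule power_le_one)
    then show "\<bar>\<gamma> ^ N * (1 - indicator D \<omega>)\<bar> \<le> 1" using g0 by (simp add: indicator_def)
  qed
  have i2: "integrable (Pr x) Rf"
    by (rule integrable_bounded_Pr[OF x R_meas R_abs])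
  have "\<gamma> ^ N * (2 * measure (Pr x) D) \<le> \<gamma> ^ N * 1"
    using half g0 by (intro mult_left_mono) simp_all
  then have "\<gamma> ^ N / 2 \<le> \<gamma> ^ N * (1 - measure (Pr x) D)"
    by (simp add: field_simps)
  also have "\<gamma> ^ N * (1 - measure (Pr x) D) = (\<integral>\<omega>. \<gamma> ^ N * (1 - indicator D \<omega>) \<partial>Pr x)"
  proof -
    have "(\<integral>\<omega>. (1 - indicator D \<omega> :: real) \<partial>Pr x) = 1 - measure (Pr x) D"
    proof -
      have "(\<integral>\<omega>. (1 - indicator D \<omega> :: real) \<partial>Pr x) = (\<integral>\<omega>. 1 \<partial>Pr x) - (\<integral>\<omega>. indicator D \<omega> \<partial>Pr x)"
        by (rule Bochner_Integration.integral_diff) (simp_all add: P.emeasure_eq_measure DsP)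
      also have "\<dots> = 1 - measure (Pr x) D"
        using sets.sets_into_space[OF DsP] by (simp add: P.prob_space Int_absorb2)
      finally show ?thesis .
    qed
    then show ?thesis by simp
  qed
  also have "\<dots> \<le> (\<integral>\<omega>. Rf \<omega> \<partial>Pr x)"
    by (rule integral_mono[OF i1 i2]) (simp add: space_Pr[OF x] low)
  finally show ?thesis by (simp add: V_def N_def)
qed

lemma W1_integral:
  assumes x: "x \<in> space Mx"
  shows "(\<integral>\<omega>. CC - V (fst (\<omega> (Suc 0))) \<partial>Pr x) = CC - (\<integral>\<omega>. V (fst (\<omega> (Suc 0))) \<partial>Pr x)"
proof -
  interpret P: prob_space "Pr x" by (rule Pr_prob[OF x])
  show ?thesis
    by (subst Bochner_Integration.integral_diff) (simp_all add: V1_integrable[OF x] P.prob_space)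
qed

lemma W1_integrable:
  assumes x: "x \<in> space Mx"
  shows "integrable (Pr x) (\<lambda>\<omega>. CC - V (fst (\<omega> (Suc 0))))"
proof -
  interpret P: prob_space "Pr x" by (rule Pr_prob[OF x])
  show ?thesis by (simp add: V1_integrable[OF x])
qed

end


theorem corollary1:
  fixes Ms :: "'s measure" and Ma :: "'a measure"
    and P :: "'s \<Rightarrow> 'a \<Rightarrow> 's measure" and \<mu> :: "'s measure"
    and AP :: "'ap set" and L :: "'s \<Rightarrow> 'ap set"
    and Q :: "'q set" and \<delta> :: "'q \<Rightarrow> 'ap set \<Rightarrow> 'q" and q0 :: 'q
    and Acc :: "('q set \<times> 'q set) set"
    and \<pi> :: "'s \<times> 'q \<Rightarrow> 'a measure"
    and \<gamma> :: real and A B :: "'q set" and I :: "('s \<times> 'q) set"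
    and r :: "'s \<times> 'q \<Rightarrow> 'a \<Rightarrow> 's \<times> 'q \<Rightarrow> real"
  defines "Mx \<equiv> prod_space Ms Q"
    and "Pr \<equiv> path_measure (prod_space Ms Q) Ma (prod_kernel Ms Q P L \<delta>) \<pi>"
    and "U \<equiv> (space Ms \<times> B) \<union>
      Abs (prod_space Ms Q) (path_measure (prod_space Ms Q) Ma (prod_kernel Ms Q P L \<delta>) \<pi>)
        (space (prod_space Ms Q) - space Ms \<times> (A \<union> B))"
  assumes \<comment> \<open>labelled MDP\<close>
    P_kernel: "(\<lambda>(s, a). P s a) \<in> Ms \<Otimes>\<^sub>M Ma \<rightarrow>\<^sub>M prob_algebra Ms"
    and mu: "prob_space \<mu>" "sets \<mu> = sets Ms"
    and AP: "finite AP"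
    and L: "L \<in> Ms \<rightarrow>\<^sub>M count_space UNIV" "\<And>s. s \<in> space Ms \<Longrightarrow> L s \<subseteq> AP"
    \<comment> \<open>deterministic Streett automaton\<close>
    and Q: "finite Q" "q0 \<in> Q"
    and delta: "\<And>q \<sigma>. q \<in> Q \<Longrightarrow> \<sigma> \<subseteq> AP \<Longrightarrow> \<delta> q \<sigma> \<in> Q"
    and Acc: "finite Acc" "\<And>A' B'. (A', B') \<in> Acc \<Longrightarrow> A' \<subseteq> Q \<and> B' \<subseteq> Q"
    \<comment> \<open>stationary policy on the product\<close>
    and pol: "\<pi> \<in> Mx \<rightarrow>\<^sub>M prob_algebra Ma"
    and gamma: "0 < \<gamma>" "\<gamma> < 1"
    and AB: "(A, B) \<in> Acc"
    and I_meas: "I \<in> sets Mx"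
    \<comment> \<open>(1)\<close>
    and I_abs: "absorbing Pr I"
    and I_init: "measure (prod_init Ms \<mu> Q q0) I = 1"
    \<comment> \<open>(2)\<close>
    and reach: "\<And>x. x \<in> I \<Longrightarrow>
       measure (Pr x) {\<omega> \<in> space (Pr x). hitting_time U \<omega> < \<infinity>} = 1"
    \<comment> \<open>(3)\<close>
    and bounded: "\<exists>H::real. \<forall>x \<in> ((space Ms \<times> A) - (space Ms \<times> B)) \<inter> I.
       (\<integral>\<^sup>+\<omega>. ennreal_of_enat (hitting_time U \<omega>) \<partial>Pr x) \<le> ennreal H"
    \<comment> \<open>(4)\<close>
    and reward: "\<And>x a y. r x a y = indicator U x"
  shows "streett_supermartingale Mx Pr (prod_init Ms \<mu> Q q0) (space Ms \<times> A) (space Ms \<times> B) I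
           (\<lambda>x. 1 / (1 - \<gamma>) - value_fun Pr \<gamma> r x)"
proof -
  interpret pm: pmdp Ms Ma P AP L Q \<delta> \<pi>
    by unfold_locales (use P_kernel AP L delta pol in \<open>simp_all add: Mx_def\<close>)
  have PrE: "Pr = pm.Pr" by (simp add: Pr_def pm.Pr_def)
  interpret v0: vmdp Ms Ma P AP L Q \<delta> \<pi> \<gamma> "{}"
    by unfold_locales (use gamma in auto)
  define Xc where "Xc = space (prod_space Ms Q) - space Ms \<times> (A \<union> B)"
  have AQ: "A \<subseteq> Q" and BQ: "B \<subseteq> Q" using Acc(2)[OF AB] by auto
  have SA: "space Ms \<times> A \<in> sets (prod_space Ms Q)"
    unfolding prod_space_def using AQ by (intro pair_measureI) auto
  have SB: "space Ms \<times> B \<in> sets (prod_space Ms Q)"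
    unfolding prod_space_def using BQ by (intro pair_measureI) auto
  have SAB: "space Ms \<times> (A \<union> B) \<in> sets (prod_space Ms Q)"
    unfolding prod_space_def using AQ BQ by (intro pair_measureI) auto
  have Xcs: "Xc \<in> sets (prod_space Ms Q)" unfolding Xc_def using SAB by auto
  have UE: "U = space Ms \<times> B \<union> Abs (prod_space Ms Q) pm.Pr Xc"
    by (simp add: U_def Xc_def pm.Pr_def)
  have Us: "U \<in> sets (prod_space Ms Q)"
    unfolding UE using SB v0.Abs_sets[OF Xcs] by auto
  interpret v: vmdp Ms Ma P AP L Q \<delta> \<pi> \<gamma> U
    by unfold_locales (use gamma Us in auto)
  have VE: "value_fun pm.Pr \<gamma> r x = v.V x" for x
    by (simp add: value_fun_def reward v.V_def v.Rf_def)
  have Isp: "I \<subseteq> space (prod_space Ms Q)" using sets.sets_into_space[OF I_meas] by (simp add: Mx_def)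
  have CCE: "1 / (1 - \<gamma>) = v.CC" by (simp add: v.CC_def)
  have notU: "x \<notin> U" if x: "x \<in> space Ms \<times> A - space Ms \<times> B" "x \<in> space (prod_space Ms Q)" for x
  proof
    assume "x \<in> U"
    with x have "x \<in> Abs (prod_space Ms Q) pm.Pr Xc" by (auto simp: UE)
    then have "x \<in> Xc" by (rule v0.Abs_in[OF Xcs])
    with x show False by (auto simp: Xc_def)
  qed
  show ?thesis
    unfolding streett_supermartingale_def
  proof (intro conjI)
    show "space Ms \<times> A \<in> sets Mx" using SA by (simp add: Mx_def)
    show "space Ms \<times> B \<in> sets Mx" using SB by (simp add: Mx_def)
    show "I \<in> sets Mx" by (rule I_meas)
    show "\<forall>x\<in>I. 0 \<le> 1 / (1 - \<gamma>) - value_fun Pr \<gamma> r x"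
      using Isp v.V_bounds by (auto simp: PrE VE CCE)
    show "measure (prod_init Ms \<mu> Q q0) I = 1" by (rule I_init)
    show "\<forall>x\<in>I. measure (Pr x) {\<omega> \<in> space (Pr x). fst (\<omega> 1) \<in> I} = 1"
      using I_abs by (simp add: absorbing_def)
    show "\<forall>x\<in>I - space Ms \<times> B. integrable (Pr x) (\<lambda>\<omega>. 1 / (1 - \<gamma>) - value_fun Pr \<gamma> r (fst (\<omega> 1)))"
      using Isp v.W1_integrable by (auto simp: VE CCE PrE)
  next
    obtain H where H: "\<forall>x \<in> ((space Ms \<times> A) - (space Ms \<times> B)) \<inter> I.
       (\<integral>\<^sup>+\<omega>. ennreal_of_enat (hitting_time U \<omega>) \<partial>Pr x) \<le> ennreal H" using bounded by blast
    define H' where "H' = max H 1"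
    define N where "N = nat \<lceil>2 * H'\<rceil>"
    define \<epsilon> where "\<epsilon> = (1 - \<gamma>) / \<gamma> * (\<gamma> ^ N / 2)"
    have \<epsilon>0: "0 < \<epsilon>" using gamma by (simp add: \<epsilon>_def)
    show "\<exists>\<epsilon>>0. \<forall>x\<in>(space Ms \<times> A - space Ms \<times> B) \<inter> I.
        (\<integral>\<omega>. 1 / (1 - \<gamma>) - value_fun Pr \<gamma> r (fst (\<omega> 1)) \<partial>Pr x) \<le> 1 / (1 - \<gamma>) - value_fun Pr \<gamma> r x - \<epsilon>"
    proof (intro exI[of _ \<epsilon>] conjI ballI \<epsilon>0)
      fix x assume xI: "x \<in> (space Ms \<times> A - space Ms \<times> B) \<inter> I"
      then have xs: "x \<in> space (prod_space Ms Q)" using Isp by auto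
      have xU: "x \<notin> U" using notU xI xs by auto
      have hx: "(\<integral>\<^sup>+\<omega>. ennreal_of_enat (hitting_time U \<omega>) \<partial>pm.Pr x) \<le> ennreal H'"
        using H xI by (auto simp: PrE H'_def intro: order_trans[OF _ ennreal_leI])
      have low: "\<gamma> ^ N / 2 \<le> v.V x"
        unfolding N_def by (rule v.V_lower[OF xs hx]) (simp add: H'_def)
      have bel: "v.V x = \<gamma> * (\<integral>\<omega>. v.V (fst (\<omega> (Suc 0))) \<partial>pm.Pr x)"
        using v.Bellman[OF xs] xU by simp
      have "(\<integral>\<omega>. v.CC - v.V (fst (\<omega> (Suc 0))) \<partial>pm.Pr x) = v.CC - v.V x / \<gamma>"
        using v.W1_integral[OF xs] bel gamma by simp
      also have "\<dots> \<le> v.CC - v.V x - \<epsilon>"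
      proof -
        have "\<epsilon> \<le> (1 - \<gamma>) / \<gamma> * v.V x"
          unfolding \<epsilon>_def using low gamma by (intro mult_left_mono) auto
        also have "(1 - \<gamma>) / \<gamma> * v.V x = v.V x / \<gamma> - v.V x"
          using gamma by (simp add: field_simps)
        finally show ?thesis by simp
      qed
      finally show "(\<integral>\<omega>. 1 / (1 - \<gamma>) - value_fun Pr \<gamma> r (fst (\<omega> 1)) \<partial>Pr x) \<le> 1 / (1 - \<gamma>) - value_fun Pr \<gamma> r x - \<epsilon>"
        by (simp add: VE CCE PrE)
    qed
  next
    show "\<forall>x\<in>I - (space Ms \<times> A \<union> space Ms \<times> B).
        (\<integral>\<omega>. 1 / (1 - \<gamma>) - value_fun Pr \<gamma> r (fst (\<omega> 1)) \<partial>Pr x) \<le> 1 / (1 - \<gamma>) - value_fun Pr \<gamma> r x"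
    proof
      fix x assume xI: "x \<in> I - (space Ms \<times> A \<union> space Ms \<times> B)"
      then have xs: "x \<in> space (prod_space Ms Q)" using Isp by auto
      have "(\<integral>\<omega>. v.CC - v.V (fst (\<omega> (Suc 0))) \<partial>pm.Pr x) \<le> v.CC - v.V x"
      proof (cases "x \<in> U")
        case True
        with xI have xA: "x \<in> Abs (prod_space Ms Q) pm.Pr Xc" by (auto simp: UE)
        have sub: "Abs (prod_space Ms Q) pm.Pr Xc \<subseteq> U" by (auto simp: UE)
        have "v.CC \<le> (\<integral>\<omega>. v.V (fst (\<omega> (Suc 0))) \<partial>pm.Pr x)"
          by (rule v.Abs_V[OF Xcs sub xA])
        then show ?thesis using v.W1_integral[OF xs] v.V_bounds[OF xs] by simp
      next
        case False
        have bel: "v.V x = \<gamma> * (\<integral>\<omega>. v.V (fst (\<omega> (Suc 0))) \<partial>pm.Pr x)"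
          using v.Bellman[OF xs] False by simp
        have "\<gamma> * v.V x \<le> 1 * v.V x"
          using gamma v.V_bounds[OF xs] by (intro mult_right_mono) auto
        then have "v.V x \<le> v.V x / \<gamma>"
          using gamma by (simp add: field_simps)
        then show ?thesis using v.W1_integral[OF xs] bel gamma by simp
      qed
      then show "(\<integral>\<omega>. 1 / (1 - \<gamma>) - value_fun Pr \<gamma> r (fst (\<omega> 1)) \<partial>Pr x) \<le> 1 / (1 - \<gamma>) - value_fun Pr \<gamma> r x"
        by (simp add: VE CCE PrE)
    qed
  qed
qed


end
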